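(* Let $\Theta$ be a space of input histories satisfying the free-choice condition, and let $(\Theta'_k)_{k\in\max\mathrm{Ext}(\Theta)}$ be a family of spaces of input histories with $E^\Theta\cap E^{\Theta'_k}=\emptyset$ for all $k$. Assume that the families of input sets $(I^{\Theta'_k}_\omega)_{\omega\in E^{\Theta'_k}}$ are identical for all $k\in\max\mathrm{Ext}(\Theta)$ and that every $\Theta'_k$ satisfies the free-choice condition. Then $$\mathrm{CC}\big(\Theta\rightsquigarrow(\Theta'_k)_k\big)=\big\{\hat\Theta\rightsquigarrow(\hat\Theta'_k)_k:\ \hat\Theta\in\mathrm{CC}(\Theta),\ \hat\Theta'_k\in\mathrm{CC}(\Theta'_k)\text{ for all }k\in\max\mathrm{Ext}(\Theta)\big\}$$ (where the family $(\hat\Theta'_k)_k$ is indexed by $\max\mathrm{Ext}(\Theta)=\max\mathrm{Ext}(\hat\Theta)$).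
   Context: A partial function is a function $f$ with domain $\mathrm{dom}(f)$ a subset of an index set, values in given sets; ordered by restriction ($f\le g$ iff $\mathrm{dom}(f)\subseteq\mathrm{dom}(g)$, $g|_{\mathrm{dom}(f)}=f$). Compatible = agreeing on common domain; a compatible set $\mathcal F$ has join $\bigvee\mathcal F$ (union). $\Theta$ is $\vee$-prime if for compatible $\mathcal F\subseteq\Theta$ with $\bigvee\mathcal F\in\Theta$ we have $\bigvee\mathcal F\in\mathcal F$. A space of input histories is a finite $\vee$-prime set of partial functions; $E^\Theta=\bigcup_{h\in\Theta}\mathrm{dom}(h)$, $I^\Theta_\omega=\{h(\omega):h\in\Theta,\omega\in\mathrm{dom}(h)\}$, $\mathrm{Ext}(\Theta)=\{\bigvee\mathcal F:\emptyset\ne\mathcal F\subseteq\Theta\text{ compatible}\}$. Free-choice: maximal elements of $\mathrm{Ext}(\Theta)$ are exactly the total functions in $\prod_{\omega\in E^\Theta}I^\Theta_\omega$. $\mathrm{tips}_\Theta(h)=\mathrm{dom}(h)\setminus\bigcup\{\mathrm{dom}(k):k\in\mathrm{Ext}(\Theta),k<h\}$. Causally complete: free-choice and $|\mathrm{tips}_\Theta(h)|=1$ for all $h\in\Theta$. Order: $\Theta_1\le\Theta_2$ iff $\mathrm{Ext}(\Theta_1)\supseteq\mathrm{Ext}(\Theta_2)$. $\mathrm{CC}(\Theta)$ = maximal elements of $\{\Theta_1\le\Theta:\Theta_1\text{ causally complete}\}$. Conditional sequential composition: $\Theta\rightsquigarrow(\Theta'_k)_k=\Theta\cup\{k\vee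 h':k\in\max\mathrm{Ext}(\Theta),\ h'\in\Theta'_k\}$. *)

theory Defs
  imports Main
begin

text \<open>Partial functions from an index set of events 'e to values 'v are modelled
as maps 'e \<rightharpoonup> 'v; the order by restriction is map_le.\<close>

definition compatible :: "('e \<rightharpoonup> 'v) set \<Rightarrow> bool" where
  "compatible F \<longleftrightarrow> (\<forall>f\<in>F. \<forall>g\<in>F. \<forall>x\<in>dom f \<inter> dom g. f x = g x)"

definition pjoin :: "('e \<rightharpoonup> 'v) set \<Rightarrow> ('e \<rightharpoonup> 'v)" where
  "pjoin F = (\<lambda>x. if \<exists>f\<in>F. x \<in> dom f then (SOME f. f \<in> F \<and> x \<in> dom f) x else None)"

definition vee_prime :: "('e \<rightharpoonup> 'v) set \<Rightarrow> bool" where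
  "vee_prime \<Theta> \<longleftrightarrow> (\<forall>F. F \<subseteq> \<Theta> \<and> compatible F \<and> pjoin F \<in> \<Theta> \<longrightarrow> pjoin F \<in> F)"

definition space :: "('e \<rightharpoonup> 'v) set \<Rightarrow> bool" where
  "space \<Theta> \<longleftrightarrow> finite \<Theta> \<and> vee_prime \<Theta>"

definition events :: "('e \<rightharpoonup> 'v) set \<Rightarrow> 'e set" where
  "events \<Theta> = (\<Union>h\<in>\<Theta>. dom h)"

definition inputs :: "('e \<rightharpoonup> 'v) set \<Rightarrow> 'e \<Rightarrow> 'v set" where
  "inputs \<Theta> \<omega> = {v. \<exists>h\<in>\<Theta>. h \<omega> = Some v}"

definition Ext :: "('e \<rightharpoonup> 'v) set \<Rightarrow> ('e \<rightharpoonup> 'v) set" where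
  "Ext \<Theta> = {pjoin F | F. F \<noteq> {} \<and> F \<subseteq> \<Theta> \<and> compatible F}"

definition maxExt :: "('e \<rightharpoonup> 'v) set \<Rightarrow> ('e \<rightharpoonup> 'v) set" where
  "maxExt \<Theta> = {k \<in> Ext \<Theta>. \<forall>k'\<in>Ext \<Theta>. k \<subseteq>\<^sub>m k' \<longrightarrow> k' = k}"

definition free_choice :: "('e \<rightharpoonup> 'v) set \<Rightarrow> bool" where
  "free_choice \<Theta> \<longleftrightarrow>
     maxExt \<Theta> = {f. dom f = events \<Theta> \<and> (\<forall>\<omega>\<in>events \<Theta>. the (f \<omega>) \<in> inputs \<Theta> \<omega>)}"

definition tips :: "('e \<rightharpoonup> 'v) set \<Rightarrow> ('e \<rightharpoonup> 'v) \<Rightarrow> 'e set" where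
  "tips \<Theta> h = dom h - (\<Union>{dom k | k. k \<in> Ext \<Theta> \<and> k \<subseteq>\<^sub>m h \<and> k \<noteq> h})"

definition causally_complete :: "('e \<rightharpoonup> 'v) set \<Rightarrow> bool" where
  "causally_complete \<Theta> \<longleftrightarrow> free_choice \<Theta> \<and> (\<forall>h\<in>\<Theta>. card (tips \<Theta> h) = 1)"

definition space_le :: "('e \<rightharpoonup> 'v) set \<Rightarrow> ('e \<rightharpoonup> 'v) set \<Rightarrow> bool" where
  "space_le \<Theta>1 \<Theta>2 \<longleftrightarrow> Ext \<Theta>2 \<subseteq> Ext \<Theta>1"

definition CC :: "('e \<rightharpoonup> 'v) set \<Rightarrow> ('e \<rightharpoonup> 'v) set set" where
  "CC \<Theta> = (let S = {\<Theta>1. space \<Theta>1 \<and> space_le \<Theta>1 \<Theta> \<and> causally_complete \<Theta>1}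
            in {\<Theta>1 \<in> S. \<forall>\<Theta>2\<in>S. space_le \<Theta>1 \<Theta>2 \<longrightarrow> space_le \<Theta>2 \<Theta>1})"

text \<open>Conditional sequential composition; the family is a function on maxExt \<Theta>
 (values outside maxExt \<Theta> are irrelevant). The join k \<or> h' of two compatible
 partial functions is the join of the set {k, h'}.\<close>
definition cseq :: "('e \<rightharpoonup> 'v) set \<Rightarrow> (('e \<rightharpoonup> 'v) \<Rightarrow> ('e \<rightharpoonup> 'v) set) \<Rightarrow> ('e \<rightharpoonup> 'v) set" where
  "cseq \<Theta> \<Theta>' = \<Theta> \<union> {pjoin {k, h'} | k h'. k \<in> maxExt \<Theta> \<and> h' \<in> \<Theta>' k}"

end

theory Submission
  imports Defs
begin

definition cov :: "('e \<rightharpoonup> 'v) set \<Rightarrow> ('e \<rightharpoonup> 'v) \<Rightarrow> bool" where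
  "cov A f \<longleftrightarrow> (\<forall>x\<in>dom f. \<exists>h\<in>A. h \<subseteq>\<^sub>m f \<and> x \<in> dom h)"

definition fam :: "('e \<rightharpoonup> 'v) set \<Rightarrow> ('e \<rightharpoonup> 'v) set" where
  "fam A = {f. cov A f}"

definition sb :: "('e \<rightharpoonup> 'v) set \<Rightarrow> ('e \<rightharpoonup> 'v) \<Rightarrow> ('e \<rightharpoonup> 'v) set" where
  "sb F h = {g\<in>F. g \<subseteq>\<^sub>m h \<and> g \<noteq> h}"

definition irr :: "('e \<rightharpoonup> 'v) set \<Rightarrow> ('e \<rightharpoonup> 'v) set" where
  "irr F = {h\<in>F. \<not> cov (sb F h) h}"

definition cl :: "('e \<rightharpoonup> 'v) set \<Rightarrow> bool" where
  "cl F \<longleftrightarrow> (\<forall>f. cov F f \<longrightarrow> f \<in> F)"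

definition acc :: "('e \<rightharpoonup> 'v) set \<Rightarrow> bool" where
  "acc F \<longleftrightarrow> (\<forall>f\<in>F. f \<noteq> Map.empty \<longrightarrow> (\<exists>x\<in>dom f. f(x:=None) \<in> F))"

definition findom :: "('e \<rightharpoonup> 'v) set \<Rightarrow> bool" where
  "findom F \<longleftrightarrow> (\<forall>f\<in>F. finite (dom f))"

definition maxF :: "('e \<rightharpoonup> 'v) set \<Rightarrow> ('e \<rightharpoonup> 'v) set" where
  "maxF F = {k\<in>F. k \<noteq> Map.empty \<and> (\<forall>k'\<in>F. k \<subseteq>\<^sub>m k' \<longrightarrow> k' = k)}"

definition Tot :: "'e set \<Rightarrow> ('e \<Rightarrow> 'v set) \<Rightarrow> ('e \<rightharpoonup> 'v) set" where
  "Tot E I = {f. dom f = E \<and> (\<forall>\<omega>\<in>E. the (f \<omega>) \<in> I \<omega>)}"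

definition fcF :: "('e \<rightharpoonup> 'v) set \<Rightarrow> bool" where
  "fcF F \<longleftrightarrow> maxF F = Tot (events F) (inputs F)"

definition good :: "('e \<rightharpoonup> 'v) set \<Rightarrow> ('e \<rightharpoonup> 'v) set \<Rightarrow> bool" where
  "good X F \<longleftrightarrow> finite F \<and> cl F \<and> acc F \<and> findom F \<and> fcF F \<and> fam X \<subseteq> F"

definition mingood :: "('e \<rightharpoonup> 'v) set \<Rightarrow> ('e \<rightharpoonup> 'v) set \<Rightarrow> bool" where
  "mingood X F \<longleftrightarrow> good X F \<and> (\<forall>F2. good X F2 \<longrightarrow> F2 \<subseteq> F \<longrightarrow> F = F2)"

definition below_max :: "('e \<rightharpoonup> 'v) set \<Rightarrow> ('e \<rightharpoonup> 'v) set \<Rightarrow> bool" where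
  "below_max X F \<longleftrightarrow> (\<forall>f\<in>F. \<exists>m\<in>maxExt X. f \<subseteq>\<^sub>m m)"

lemma pjoin_dom: "x \<in> dom (pjoin F) \<longleftrightarrow> (\<exists>f\<in>F. x \<in> dom f)"
proof
  assume "x \<in> dom (pjoin F)"
  then show "\<exists>f\<in>F. x \<in> dom f" unfolding pjoin_def by (auto split: if_splits)
next
  assume h: "\<exists>f\<in>F. x \<in> dom f"
  then have "(SOME f. f \<in> F \<and> x \<in> dom f) \<in> F \<and> x \<in> dom (SOME f. f \<in> F \<and> x \<in> dom f)"
    by (metis (mono_tags, lifting) someI_ex)
  then show "x \<in> dom (pjoin F)" using h unfolding pjoin_def by (auto simp: dom_def)
qed

lemma pjoin_val: assumes "compatible F" "g \<in> F" "x \<in> dom g" shows "pjoin F x = g x"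
proof -
  have h: "\<exists>f\<in>F. x \<in> dom f" using assms by blast
  then have s: "(SOME f. f \<in> F \<and> x \<in> dom f) \<in> F \<and> x \<in> dom (SOME f. f \<in> F \<and> x \<in> dom f)"
    by (metis (mono_tags, lifting) someI_ex)
  have "pjoin F x = (SOME f. f \<in> F \<and> x \<in> dom f) x" using h unfolding pjoin_def by simp
  also have "\<dots> = g x" using assms s unfolding compatible_def by blast
  finally show ?thesis .
qed

lemma pjoin_le: assumes "compatible F" "g \<in> F" shows "g \<subseteq>\<^sub>m pjoin F"
  unfolding map_le_def using pjoin_val[OF assms] by simp

lemma pjoin_eq: assumes "\<forall>g\<in>F. g \<subseteq>\<^sub>m f" "\<forall>x\<in>dom f. \<exists>g\<in>F. x \<in> dom g" shows "pjoin F = f"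
proof
  fix x
  show "pjoin F x = f x"
  proof (cases "\<exists>g\<in>F. x \<in> dom g")
    case True
    then have s: "(SOME f. f \<in> F \<and> x \<in> dom f) \<in> F \<and> x \<in> dom (SOME f. f \<in> F \<and> x \<in> dom f)"
      by (metis (mono_tags, lifting) someI_ex)
    have "pjoin F x = (SOME f. f \<in> F \<and> x \<in> dom f) x" using True unfolding pjoin_def by simp
    also have "\<dots> = f x" using assms(1) s unfolding map_le_def by blast
    finally show ?thesis .
  next
    case False
    then have "f x = None" using assms(2) by blast
    then show ?thesis using False unfolding pjoin_def by auto
  qed
qed

lemma compatible_below: "\<forall>g\<in>F. g \<subseteq>\<^sub>m f \<Longrightarrow> compatible F"
  unfolding compatible_def map_le_def by (metis IntD1 IntD2)

lemma pjoin_pair: assumes "dom a \<inter> dom b = {}" shows "pjoin {a, b} = a ++ b"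
  by (rule pjoin_eq) (use assms in \<open>auto simp: map_le_def map_add_def dom_def split: option.splits\<close>)

lemma cov_self: "h \<in> A \<Longrightarrow> cov A h"
  unfolding cov_def using map_le_refl by blast

lemma cov_mono: assumes "cov A f" "A \<subseteq> B" shows "cov B f"
  unfolding cov_def
proof
  fix x assume "x \<in> dom f"
  then obtain h where "h \<in> A" "h \<subseteq>\<^sub>m f" "x \<in> dom h" using assms(1) unfolding cov_def by blast
  then show "\<exists>h\<in>B. h \<subseteq>\<^sub>m f \<and> x \<in> dom h" using assms(2) by blast
qed

lemma cov_empty[simp]: "cov A Map.empty"
  unfolding cov_def by auto

lemma cov_trans: assumes "cov A f" "\<And>g. g \<in> A \<Longrightarrow> g \<subseteq>\<^sub>m f \<Longrightarrow> cov B g"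
  shows "cov {b\<in>B. \<exists>g\<in>A. b \<subseteq>\<^sub>m g \<and> g \<subseteq>\<^sub>m f} f"
  unfolding cov_def
proof
  fix x assume "x \<in> dom f"
  then obtain g where g: "g \<in> A" "g \<subseteq>\<^sub>m f" "x \<in> dom g" using assms(1) unfolding cov_def by blast
  then obtain b where "b \<in> B" "b \<subseteq>\<^sub>m g" "x \<in> dom b" using assms(2)[OF g(1,2)] unfolding cov_def by blast
  then show "\<exists>h\<in>{b \<in> B. \<exists>g\<in>A. b \<subseteq>\<^sub>m g \<and> g \<subseteq>\<^sub>m f}. h \<subseteq>\<^sub>m f \<and> x \<in> dom h"
    using g map_le_trans by blast
qed

lemma cov_trans': assumes "cov A f" "\<And>g. g \<in> A \<Longrightarrow> g \<subseteq>\<^sub>m f \<Longrightarrow> cov B g" shows "cov B f"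
proof -
  have "cov {b\<in>B. \<exists>g\<in>A. b \<subseteq>\<^sub>m g \<and> g \<subseteq>\<^sub>m f} f" by (rule cov_trans) (use assms in auto)
  then show ?thesis by (rule cov_mono) auto
qed

lemma covE: "cov A f \<Longrightarrow> x \<in> dom f \<Longrightarrow> \<exists>h\<in>A. h \<subseteq>\<^sub>m f \<and> x \<in> dom h"
  unfolding cov_def by blast

lemma famD: "f \<in> fam A \<Longrightarrow> cov A f"
  by (simp add: fam_def)

lemma famI: "cov A f \<Longrightarrow> f \<in> fam A"
  by (simp add: fam_def)

lemma le_dom: "f \<subseteq>\<^sub>m g \<Longrightarrow> x \<in> dom f \<Longrightarrow> x \<in> dom g"
  by (rule subsetD[OF map_le_implies_dom_le])

lemma restrict_le: "m |` A \<subseteq>\<^sub>m m"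
  unfolding map_le_def by auto

lemma le_restrict: "g \<subseteq>\<^sub>m m \<Longrightarrow> dom g \<subseteq> A \<Longrightarrow> g \<subseteq>\<^sub>m m |` A"
  unfolding map_le_def by auto

lemma not_cov: "\<not> cov A h \<Longrightarrow> \<exists>x. x \<in> dom h \<and> (\<forall>g\<in>A. g \<subseteq>\<^sub>m h \<longrightarrow> x \<notin> dom g)"
  unfolding cov_def by auto

lemma fam_cl: "cl (fam A)"
  unfolding cl_def fam_def using cov_trans' by blast

lemma subset_fam: "A \<subseteq> fam A"
  unfolding fam_def using cov_self by blast

lemma empty_fam: "Map.empty \<in> fam A"
  unfolding fam_def by simp

lemma cl_empty: "cl F \<Longrightarrow> Map.empty \<in> F"
  unfolding cl_def by simp

lemma fam_mono: "A \<subseteq> B \<Longrightarrow> fam A \<subseteq> fam B"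
  unfolding fam_def using cov_mono by blast

lemma fam_sub_cl: "A \<subseteq> F \<Longrightarrow> cl F \<Longrightarrow> fam A \<subseteq> F"
  unfolding fam_def cl_def using cov_mono by blast

lemma cov_dom: "cov A f \<Longrightarrow> dom f \<subseteq> events A"
  unfolding cov_def events_def by blast

lemma events_fam: "events (fam A) = events A"
proof
  show "events (fam A) \<subseteq> events A" unfolding events_def fam_def using cov_dom[unfolded events_def] by blast
  show "events A \<subseteq> events (fam A)" unfolding events_def using subset_fam by blast
qed

lemma inputs_fam: "inputs (fam A) = inputs A"
proof (rule ext, rule set_eqI)
  fix w v
  show "v \<in> inputs (fam A) w \<longleftrightarrow> v \<in> inputs A w"
  proof
    assume "v \<in> inputs (fam A) w"
    then obtain f where f: "cov A f" "f w = Some v" unfolding inputs_def fam_def by blast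
    then obtain h where "h \<in> A" "h \<subseteq>\<^sub>m f" "w \<in> dom h" unfolding cov_def by blast
    then have "h w = Some v" using f by (metis map_le_def)
    then show "v \<in> inputs A w" unfolding inputs_def using \<open>h \<in> A\<close> by blast
  next
    assume "v \<in> inputs A w" then show "v \<in> inputs (fam A) w"
      unfolding inputs_def using subset_fam by blast
  qed
qed

lemma Ext_sub_fam: "Ext A \<subseteq> fam A"
proof
  fix f assume "f \<in> Ext A"
  then obtain F where F: "f = pjoin F" "F \<subseteq> A" "compatible F" unfolding Ext_def by blast
  show "f \<in> fam A" unfolding fam_def cov_def mem_Collect_eq
  proof
    fix x assume "x \<in> dom f"
    then have "x \<in> dom (pjoin F)" using F(1) by simp
    then obtain g where g: "g \<in> F" "x \<in> dom g" unfolding pjoin_dom by blast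
    have "g \<subseteq>\<^sub>m f" using pjoin_le[OF F(3) g(1)] F(1) by simp
    then show "\<exists>h\<in>A. h \<subseteq>\<^sub>m f \<and> x \<in> dom h" using g F(2) by blast
  qed
qed

lemma fam_sub_Ext: assumes "f \<in> fam A" "f \<noteq> Map.empty" shows "f \<in> Ext A"
proof -
  let ?F = "{h\<in>A. h \<subseteq>\<^sub>m f}"
  have c: "cov A f" using assms(1) by (simp add: fam_def)
  obtain x where "x \<in> dom f" using assms(2) by fastforce
  then obtain h where "h \<in> A" "h \<subseteq>\<^sub>m f" "x \<in> dom h" using c unfolding cov_def by blast
  then have ne: "?F \<noteq> {}" by blast
  have a1: "\<forall>g\<in>?F. g \<subseteq>\<^sub>m f" by simp
  have a2: "\<forall>x\<in>dom f. \<exists>g\<in>?F. x \<in> dom g"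
  proof
    fix y assume "y \<in> dom f"
    then obtain h where "h \<in> A" "h \<subseteq>\<^sub>m f" "y \<in> dom h" using c unfolding cov_def by blast
    then show "\<exists>g\<in>?F. y \<in> dom g" by blast
  qed
  have "pjoin ?F = f" using pjoin_eq[OF a1 a2] .
  moreover have "compatible ?F" using compatible_below[OF a1] .
  moreover have "?F \<subseteq> A" by blast
  ultimately show ?thesis unfolding Ext_def mem_Collect_eq using ne by (intro exI[of _ ?F]) simp
qed

lemma empty_Ext: "Map.empty \<notin> A \<Longrightarrow> Map.empty \<notin> Ext A"
proof
  assume a: "Map.empty \<notin> A" "Map.empty \<in> Ext A"
  then obtain F where F: "Map.empty = pjoin F" "F \<noteq> {}" "F \<subseteq> A" "compatible F" unfolding Ext_def by blast
  then obtain g where "g \<in> F" by blast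
  then have "g \<subseteq>\<^sub>m Map.empty" using F pjoin_le by metis
  then have "g = Map.empty" by (metis dom_empty map_le_implies_dom_le subset_empty empty_iff ext domIff)
  then show False using a \<open>g \<in> F\<close> F by blast
qed

lemma Ext_eq: "Map.empty \<notin> A \<Longrightarrow> Ext A = fam A - {Map.empty}"
  using Ext_sub_fam fam_sub_Ext empty_Ext by blast

lemma sub_Ext: "A \<subseteq> Ext A"
proof
  fix h assume h: "h \<in> A"
  have "pjoin {h} = h" by (rule pjoin_eq) auto
  moreover have "compatible {h}" unfolding compatible_def by auto
  ultimately show "h \<in> Ext A" unfolding Ext_def mem_Collect_eq using h by (intro exI[of _ "{h}"]) simp
qed

lemma finite_fam: assumes "finite A" shows "finite (fam A)"
proof -
  have "fam A \<subseteq> insert Map.empty (pjoin ` Pow A)"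
  proof
    fix f assume f: "f \<in> fam A"
    show "f \<in> insert Map.empty (pjoin ` Pow A)"
    proof (cases "f = Map.empty")
      case False
      then have "f \<in> Ext A" using f fam_sub_Ext by blast
      then show ?thesis unfolding Ext_def by blast
    qed simp
  qed
  then show ?thesis using assms finite_subset by blast
qed


lemma map_le_antisym': "f \<subseteq>\<^sub>m g \<Longrightarrow> g \<subseteq>\<^sub>m f \<Longrightarrow> f = g"
  by (rule map_le_antisym)

lemma map_le_dom_eq: "f0 \<subseteq>\<^sub>m f \<Longrightarrow> dom f \<subseteq> dom f0 \<Longrightarrow> f0 = f"
  by (metis map_le_antisym map_le_def subsetD)

lemma map_le_neq_psubset: "g \<subseteq>\<^sub>m h \<Longrightarrow> g \<noteq> h \<Longrightarrow> dom g \<subset> dom h"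
  by (metis map_le_dom_eq map_le_implies_dom_le psubsetI)

lemma vee_prime_iff: "vee_prime \<Theta> \<longleftrightarrow> (\<forall>h\<in>\<Theta>. \<not> cov (sb \<Theta> h) h)"
proof
  assume vp: "vee_prime \<Theta>"
  show "\<forall>h\<in>\<Theta>. \<not> cov (sb \<Theta> h) h"
  proof (intro ballI notI)
    fix h assume h: "h \<in> \<Theta>" and c: "cov (sb \<Theta> h) h"
    let ?F = "sb \<Theta> h"
    have a1: "\<forall>g\<in>?F. g \<subseteq>\<^sub>m h" unfolding sb_def by simp
    have a2: "\<forall>x\<in>dom h. \<exists>g\<in>?F. x \<in> dom g"
    proof
      fix x assume "x \<in> dom h"
      then obtain g where "g \<in> ?F" "x \<in> dom g" using covE[OF c] by blast
      then show "\<exists>g\<in>?F. x \<in> dom g" by blast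
    qed
    have pj: "pjoin ?F = h" using pjoin_eq[OF a1 a2] .
    have s1: "?F \<subseteq> \<Theta>" unfolding sb_def by blast
    have s2: "compatible ?F" using compatible_below[OF a1] .
    have s3: "pjoin ?F \<in> \<Theta>" using h pj by simp
    have "pjoin ?F \<in> ?F" using vp s1 s2 s3 unfolding vee_prime_def by blast
    then show False using pj unfolding sb_def by simp
  qed
next
  assume r: "\<forall>h\<in>\<Theta>. \<not> cov (sb \<Theta> h) h"
  show "vee_prime \<Theta>" unfolding vee_prime_def
  proof (intro allI impI, elim conjE)
    fix F assume F: "F \<subseteq> \<Theta>" "compatible F" "pjoin F \<in> \<Theta>"
    show "pjoin F \<in> F"
    proof (rule ccontr)
      assume n: "pjoin F \<notin> F"
      let ?h = "pjoin F"
      have sub: "F \<subseteq> sb \<Theta> ?h"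
      proof
        fix g assume g: "g \<in> F"
        then have "g \<subseteq>\<^sub>m ?h" using pjoin_le[OF F(2)] by simp
        moreover have "g \<noteq> ?h" using g n by auto
        ultimately show "g \<in> sb \<Theta> ?h" unfolding sb_def using g F(1) by blast
      qed
      have "cov F ?h" unfolding cov_def
      proof
        fix x assume "x \<in> dom ?h"
        then obtain g where g: "g \<in> F" "x \<in> dom g" unfolding pjoin_dom by blast
        then have "g \<subseteq>\<^sub>m ?h" using pjoin_le[OF F(2)] by simp
        then show "\<exists>g\<in>F. g \<subseteq>\<^sub>m ?h \<and> x \<in> dom g" using g by blast
      qed
      then have "cov (sb \<Theta> ?h) ?h" using cov_mono sub by blast
      then show False using r F(3) by blast
    qed
  qed
qed

lemma vee_prime_empty: "vee_prime \<Theta> \<Longrightarrow> Map.empty \<notin> \<Theta>"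
  unfolding vee_prime_iff by auto

lemma space_empty: "space \<Theta> \<Longrightarrow> Map.empty \<notin> \<Theta>"
  unfolding space_def using vee_prime_empty by blast

lemma irr_fam: assumes "vee_prime \<Theta>" shows "irr (fam \<Theta>) = \<Theta>"
proof
  show "\<Theta> \<subseteq> irr (fam \<Theta>)"
  proof
    fix h assume h: "h \<in> \<Theta>"
    have "\<not> cov (sb (fam \<Theta>) h) h"
    proof
      assume c: "cov (sb (fam \<Theta>) h) h"
      have "cov {b\<in>\<Theta>. \<exists>g\<in>sb (fam \<Theta>) h. b \<subseteq>\<^sub>m g \<and> g \<subseteq>\<^sub>m h} h"
        by (rule cov_trans[OF c]) (simp add: sb_def fam_def)
      moreover have "{b\<in>\<Theta>. \<exists>g\<in>sb (fam \<Theta>) h. b \<subseteq>\<^sub>m g \<and> g \<subseteq>\<^sub>m h} \<subseteq> sb \<Theta> h"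
      proof
        fix b assume "b \<in> {b\<in>\<Theta>. \<exists>g\<in>sb (fam \<Theta>) h. b \<subseteq>\<^sub>m g \<and> g \<subseteq>\<^sub>m h}"
        then obtain g where b: "b \<in> \<Theta>" "g \<in> sb (fam \<Theta>) h" "b \<subseteq>\<^sub>m g" "g \<subseteq>\<^sub>m h" by blast
        have "g \<noteq> h" using b(2) unfolding sb_def by simp
        then have "b \<noteq> h" using b(3,4) map_le_antisym by metis
        moreover have "b \<subseteq>\<^sub>m h" using map_le_trans[OF b(3) b(4)] .
        ultimately show "b \<in> sb \<Theta> h" unfolding sb_def using b(1) by simp
      qed
      ultimately have "cov (sb \<Theta> h) h" using cov_mono by blast
      then show False using assms h unfolding vee_prime_iff by blast
    qed
    then show "h \<in> irr (fam \<Theta>)" unfolding irr_def using h subset_fam by blast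
  qed
next
  show "irr (fam \<Theta>) \<subseteq> \<Theta>"
  proof
    fix h assume "h \<in> irr (fam \<Theta>)"
    then have c: "cov \<Theta> h" and n: "\<not> cov (sb (fam \<Theta>) h) h" unfolding irr_def fam_def by auto
    from not_cov[OF n] obtain x where x0: "x \<in> dom h \<and> (\<forall>g\<in>sb (fam \<Theta>) h. g \<subseteq>\<^sub>m h \<longrightarrow> x \<notin> dom g)" ..
    have x: "x \<in> dom h" "\<forall>g\<in>sb (fam \<Theta>) h. g \<subseteq>\<^sub>m h \<longrightarrow> x \<notin> dom g" using x0 by simp_all
    from covE[OF c x(1)] obtain g where g: "g \<in> \<Theta>" "g \<subseteq>\<^sub>m h" "x \<in> dom g" by blast
    have "g \<in> fam \<Theta>" using g(1) subset_fam by blast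
    have "g \<notin> sb (fam \<Theta>) h" using x(2) g(2,3) by blast
    then have "g = h" using \<open>g \<in> fam \<Theta>\<close> g(2) unfolding sb_def by blast
    then show "h \<in> \<Theta>" using g(1) by simp
  qed
qed

lemma sb_finite: "finite F \<Longrightarrow> finite (sb F h)"
  unfolding sb_def by simp

lemma sb_mono_lt: assumes "finite F" "g \<in> sb F f" shows "card (sb F g) < card (sb F f)"
proof -
  have g: "g \<in> F" "g \<subseteq>\<^sub>m f" "g \<noteq> f" using assms(2) unfolding sb_def by auto
  have "sb F g \<subseteq> sb F f"
  proof
    fix g' assume "g' \<in> sb F g"
    then have g': "g' \<in> F" "g' \<subseteq>\<^sub>m g" "g' \<noteq> g" unfolding sb_def by auto
    have "g' \<subseteq>\<^sub>m f" using map_le_trans[OF g'(2) g(2)] .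
    moreover have "g' \<noteq> f" using g'(2) g(2) g(3) map_le_antisym by metis
    ultimately show "g' \<in> sb F f" unfolding sb_def using g'(1) by simp
  qed
  moreover have "g \<notin> sb F g" unfolding sb_def by simp
  ultimately have "sb F g \<subset> sb F f" using assms(2) by blast
  then show ?thesis using sb_finite[OF assms(1)] psubset_card_mono by blast
qed

lemma cov_irr: assumes "finite F" "cl F" "f \<in> F" shows "cov (irr F) f"
  using assms(3)
proof (induct f rule: measure_induct_rule[of "\<lambda>f. card (sb F f)"])
  case (less f)
  show ?case
  proof (cases "f \<in> irr F")
    case True then show ?thesis by (rule cov_self)
  next
    case False
    then have c: "cov (sb F f) f" using less.prems unfolding irr_def by blast
    show ?thesis
    proof (rule cov_trans'[OF c])
      fix g assume g: "g \<in> sb F f"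
      then have "g \<in> F" unfolding sb_def by simp
      then show "cov (irr F) g" using less.hyps[OF sb_mono_lt[OF assms(1) g]] by blast
    qed
  qed
qed

lemma irr_sub: "irr F \<subseteq> F"
  unfolding irr_def by blast

lemma fam_irr: assumes "finite F" "cl F" shows "fam (irr F) = F"
proof
  show "fam (irr F) \<subseteq> F"
  proof
    fix f assume "f \<in> fam (irr F)"
    then have "cov F f" unfolding fam_def using cov_mono irr_sub by blast
    then show "f \<in> F" using assms(2) unfolding cl_def by blast
  qed
  show "F \<subseteq> fam (irr F)" unfolding fam_def using cov_irr[OF assms] by blast
qed

lemma sb_mono_set: "A \<subseteq> B \<Longrightarrow> sb A h \<subseteq> sb B h"
  unfolding sb_def by blast

lemma space_irr: assumes "finite F" shows "space (irr F)"
  unfolding space_def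
proof
  show "finite (irr F)" using assms irr_sub finite_subset by blast
  show "vee_prime (irr F)" unfolding vee_prime_iff
  proof (intro ballI notI)
    fix h assume h: "h \<in> irr F" and c: "cov (sb (irr F) h) h"
    have "cov (sb F h) h" using cov_mono[OF c sb_mono_set[OF irr_sub]] .
    then show False using h unfolding irr_def by blast
  qed
qed

lemma space_eq_fam: assumes "space A" "space B" "fam A = fam B" shows "A = B"
  using irr_fam assms unfolding space_def by metis

lemma tips_mem: "x \<in> tips \<Theta> h \<longleftrightarrow> x \<in> dom h \<and> (\<forall>g\<in>\<Theta>. g \<subseteq>\<^sub>m h \<longrightarrow> g \<noteq> h \<longrightarrow> x \<notin> dom g)"
proof
  assume "x \<in> tips \<Theta> h"
  then have x: "x \<in> dom h" "\<And>k. k \<in> Ext \<Theta> \<Longrightarrow> k \<subseteq>\<^sub>m h \<Longrightarrow> k \<noteq> h \<Longrightarrow> x \<notin> dom k"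
    unfolding tips_def by auto
  then show "x \<in> dom h \<and> (\<forall>g\<in>\<Theta>. g \<subseteq>\<^sub>m h \<longrightarrow> g \<noteq> h \<longrightarrow> x \<notin> dom g)"
    using sub_Ext by blast
next
  assume a: "x \<in> dom h \<and> (\<forall>g\<in>\<Theta>. g \<subseteq>\<^sub>m h \<longrightarrow> g \<noteq> h \<longrightarrow> x \<notin> dom g)"
  have "\<And>k. k \<in> Ext \<Theta> \<Longrightarrow> k \<subseteq>\<^sub>m h \<Longrightarrow> k \<noteq> h \<Longrightarrow> x \<notin> dom k"
  proof
    fix k assume k: "k \<in> Ext \<Theta>" "k \<subseteq>\<^sub>m h" "k \<noteq> h" "x \<in> dom k"
    then have "cov \<Theta> k" using Ext_sub_fam unfolding fam_def by blast
    then obtain g where g: "g \<in> \<Theta>" "g \<subseteq>\<^sub>m k" "x \<in> dom g" using covE[OF _ k(4)] by blast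
    have "g \<subseteq>\<^sub>m h" using map_le_trans[OF g(2) k(2)] .
    moreover have "g \<noteq> h" using g(2) k(2,3) map_le_antisym by metis
    ultimately show False using a g by blast
  qed
  then show "x \<in> tips \<Theta> h" unfolding tips_def using a by blast
qed

lemma tips_sub: "tips \<Theta> h \<subseteq> dom h"
  unfolding tips_def by blast

lemma cc_from_acc: assumes "vee_prime \<Theta>" "acc (fam \<Theta>)" "h \<in> \<Theta>" shows "card (tips \<Theta> h) = 1"
proof -
  have "h \<noteq> Map.empty" using vee_prime_empty assms(1,3) by blast
  moreover have "h \<in> fam \<Theta>" using assms(3) subset_fam by blast
  ultimately obtain x where x: "x \<in> dom h" "h(x:=None) \<in> fam \<Theta>" using assms(2) unfolding acc_def by blast
  have sub: "tips \<Theta> h \<subseteq> {x}"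
  proof
    fix y assume y: "y \<in> tips \<Theta> h"
    show "y \<in> {x}"
    proof (rule ccontr)
      assume yx: "y \<notin> {x}"
      have "y \<in> dom h" using subsetD[OF tips_sub y] .
      then have "y \<in> dom (h(x:=None))" using yx by simp
      then obtain g where g: "g \<in> \<Theta>" "g \<subseteq>\<^sub>m h(x:=None)" "y \<in> dom g"
        using covE[OF famD[OF x(2)]] by blast
      have le: "h(x:=None) \<subseteq>\<^sub>m h" unfolding map_le_def by auto
      have "g \<subseteq>\<^sub>m h" using map_le_trans[OF g(2) le] .
      moreover have "x \<notin> dom g" using map_le_implies_dom_le[OF g(2)] by auto
      then have "g \<noteq> h" using x(1) by blast
      ultimately show False using y g unfolding tips_mem by blast
    qed
  qed
  have "tips \<Theta> h \<noteq> {}"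
  proof
    assume e: "tips \<Theta> h = {}"
    have "cov (sb \<Theta> h) h" unfolding cov_def
    proof
      fix y assume y: "y \<in> dom h"
      then have "y \<notin> tips \<Theta> h" using e by simp
      then obtain g where "g \<in> \<Theta>" "g \<subseteq>\<^sub>m h" "g \<noteq> h" "y \<in> dom g" using y unfolding tips_mem by blast
      then show "\<exists>g\<in>sb \<Theta> h. g \<subseteq>\<^sub>m h \<and> y \<in> dom g" unfolding sb_def by blast
    qed
    then show False using assms(1,3) unfolding vee_prime_iff by blast
  qed
  with sub have "tips \<Theta> h = {x}" by blast
  then show ?thesis by simp
qed


lemma fin_dom_hist: assumes "finite \<Theta>" "\<forall>h\<in>\<Theta>. card (tips \<Theta> h) = 1" "h \<in> \<Theta>"
  shows "finite (dom h)"
  using assms(3)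
proof (induct h rule: measure_induct_rule[of "\<lambda>h. card (sb \<Theta> h)"])
  case (less h)
  have ft: "finite (tips \<Theta> h)" using assms(2) less.prems by (metis card.infinite zero_neq_one)
  have "dom h \<subseteq> tips \<Theta> h \<union> \<Union> (dom ` sb \<Theta> h)"
  proof
    fix y assume y: "y \<in> dom h"
    show "y \<in> tips \<Theta> h \<union> \<Union> (dom ` sb \<Theta> h)"
    proof (cases "y \<in> tips \<Theta> h")
      case False
      then obtain g where "g \<in> \<Theta>" "g \<subseteq>\<^sub>m h" "g \<noteq> h" "y \<in> dom g" using y unfolding tips_mem by blast
      then have "g \<in> sb \<Theta> h" "y \<in> dom g" unfolding sb_def by auto
      then show ?thesis by blast
    qed simp
  qed
  moreover have "finite (\<Union> (dom ` sb \<Theta> h))"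
  proof (rule finite_Union)
    show "finite (dom ` sb \<Theta> h)" using sb_finite[OF assms(1)] by simp
    show "\<And>M. M \<in> dom ` sb \<Theta> h \<Longrightarrow> finite M"
    proof -
      fix M assume "M \<in> dom ` sb \<Theta> h"
      then obtain g where g: "g \<in> sb \<Theta> h" "M = dom g" by blast
      have "g \<in> \<Theta>" using g(1) unfolding sb_def by simp
      then show "finite M" using less.hyps[OF sb_mono_lt[OF assms(1) g(1)]] g(2) by simp
    qed
  qed
  ultimately show ?case using ft finite_subset by blast
qed

lemma findom_fam: assumes "finite \<Theta>" "\<forall>h\<in>\<Theta>. card (tips \<Theta> h) = 1"
  shows "findom (fam \<Theta>)"
  unfolding findom_def
proof
  fix f assume "f \<in> fam \<Theta>"
  then have "dom f \<subseteq> events \<Theta>" using cov_dom unfolding fam_def by blast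
  moreover have "finite (events \<Theta>)" unfolding events_def using assms fin_dom_hist by blast
  ultimately show "finite (dom f)" using finite_subset by blast
qed

lemma le_empty_map: "k \<subseteq>\<^sub>m Map.empty \<Longrightarrow> k = Map.empty"
  by (metis map_le_antisym map_le_empty)

lemma acc_step: assumes fin: "finite \<Theta>" and cc: "\<forall>h\<in>\<Theta>. card (tips \<Theta> h) = 1"
  and f: "f \<in> fam \<Theta>"
  shows "f0 \<in> fam \<Theta> \<Longrightarrow> f0 \<subseteq>\<^sub>m f \<Longrightarrow> f0 \<noteq> f \<Longrightarrow> \<exists>x\<in>dom f. f(x:=None) \<in> fam \<Theta>"
proof (induct f0 rule: measure_induct_rule[of "\<lambda>f0. card (dom f - dom f0)"])
  case (less f0)
  have fdom: "finite (dom f)" using findom_fam[OF fin cc] f unfolding findom_def by blast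
  have cf: "cov \<Theta> f" using f unfolding fam_def by simp
  have cf0: "cov \<Theta> f0" using less.prems(1) unfolding fam_def by simp
  define B where "B = {h\<in>\<Theta>. h \<subseteq>\<^sub>m f \<and> \<not> h \<subseteq>\<^sub>m f0}"
  have "B \<noteq> {}"
  proof
    assume B: "B = {}"
    have "dom f \<subseteq> dom f0"
    proof
      fix y assume "y \<in> dom f"
      then obtain h where h: "h \<in> \<Theta>" "h \<subseteq>\<^sub>m f" "y \<in> dom h" using covE[OF cf] by blast
      then have "h \<subseteq>\<^sub>m f0" using B unfolding B_def by blast
      then show "y \<in> dom f0" using h(3) by (rule le_dom)
    qed
    then show False using map_le_dom_eq less.prems(2,3) by blast
  qed
  then obtain h0 where "h0 \<in> B" by blast
  obtain h where hB: "h \<in> B" and hmin: "\<forall>h'. h' \<in> B \<longrightarrow> card (dom h) \<le> card (dom h')"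
    using ex_has_least_nat[of "\<lambda>h. h \<in> B" h0 "\<lambda>h. card (dom h)"] \<open>h0 \<in> B\<close> by blast
  have h: "h \<in> \<Theta>" "h \<subseteq>\<^sub>m f" "\<not> h \<subseteq>\<^sub>m f0" using hB unfolding B_def by auto
  have hfin: "finite (dom h)" using finite_subset[OF map_le_implies_dom_le[OF h(2)] fdom] .
  obtain t where t: "tips \<Theta> h = {t}" using cc h(1) card_1_singletonE by blast
  have tdom: "t \<in> dom h" using subsetD[OF tips_sub, of t \<Theta> h] t by simp
  have rest: "\<forall>y\<in>dom h. y \<noteq> t \<longrightarrow> y \<in> dom f0"
  proof (intro ballI impI)
    fix y assume y: "y \<in> dom h" "y \<noteq> t"
    then have "y \<notin> tips \<Theta> h" using t by simp
    then obtain g where g: "g \<in> \<Theta>" "g \<subseteq>\<^sub>m h" "g \<noteq> h" "y \<in> dom g" using y(1) unfolding tips_mem by blast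
    have gf: "g \<subseteq>\<^sub>m f" using map_le_trans[OF g(2) h(2)] .
    have "g \<subseteq>\<^sub>m f0"
    proof (rule ccontr)
      assume "\<not> g \<subseteq>\<^sub>m f0"
      then have "g \<in> B" unfolding B_def using g(1) gf by blast
      moreover have "card (dom g) < card (dom h)"
        using psubset_card_mono[OF hfin map_le_neq_psubset[OF g(2,3)]] .
      ultimately show False using hmin by fastforce
    qed
    then show "y \<in> dom f0" using g(4) by (rule le_dom)
  qed
  have tnot: "t \<notin> dom f0"
  proof
    assume "t \<in> dom f0"
    then have "dom h \<subseteq> dom f0" using rest by (metis subsetI)
    then have "h \<subseteq>\<^sub>m f0" using h(2) less.prems(2) unfolding map_le_def by (metis subsetD)
    then show False using h(3) by simp
  qed
  have tf: "t \<in> dom f" using le_dom[OF h(2) tdom] .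
  define f1 where "f1 = f |` (insert t (dom f0))"
  have f1le: "f1 \<subseteq>\<^sub>m f" unfolding f1_def by (rule restrict_le)
  have f0le: "f0 \<subseteq>\<^sub>m f1" unfolding f1_def by (rule le_restrict[OF less.prems(2)]) blast
  have hle: "h \<subseteq>\<^sub>m f1" unfolding f1_def by (rule le_restrict[OF h(2)]) (use rest in blast)
  have f0f: "dom f0 \<subseteq> dom f" using map_le_implies_dom_le[OF less.prems(2)] .
  have df1: "dom f1 = insert t (dom f0)" unfolding f1_def using tf f0f by auto
  have f1fam: "f1 \<in> fam \<Theta>" unfolding fam_def mem_Collect_eq cov_def
  proof
    fix y assume "y \<in> dom f1"
    then have "y = t \<or> y \<in> dom f0" using df1 by blast
    then show "\<exists>g\<in>\<Theta>. g \<subseteq>\<^sub>m f1 \<and> y \<in> dom g"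
    proof
      assume "y = t" then show ?thesis using h(1) hle tdom by blast
    next
      assume "y \<in> dom f0"
      then obtain g where g: "g \<in> \<Theta>" "g \<subseteq>\<^sub>m f0" "y \<in> dom g" using covE[OF cf0] by blast
      have "g \<subseteq>\<^sub>m f1" using map_le_trans[OF g(2) f0le] .
      then show ?thesis using g(1,3) by blast
    qed
  qed
  show ?case
  proof (cases "f1 = f")
    case True
    have "f(t:=None) = f0"
    proof
      fix a show "(f(t:=None)) a = f0 a"
      proof (cases "a = t")
        case True then show ?thesis using tnot by (simp add: domIff)
      next
        case False
        show ?thesis
        proof (cases "a \<in> dom f0")
          case True then show ?thesis using less.prems(2) False unfolding map_le_def by auto
        next
          case n: False
          then have "a \<notin> dom f" using df1 \<open>f1 = f\<close> False by blast
          then show ?thesis using n False by (simp add: domIff)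
        qed
      qed
    qed
    then show ?thesis using tf less.prems(1) by metis
  next
    case False
    have "dom f - dom f1 = (dom f - dom f0) - {t}" using df1 by blast
    then have "card (dom f - dom f1) < card (dom f - dom f0)"
      using card_Diff1_less[of "dom f - dom f0" t] fdom tf tnot by simp
    then show ?thesis using less.hyps f1fam f1le False by blast
  qed
qed

lemma acc_fam: assumes "finite \<Theta>" "\<forall>h\<in>\<Theta>. card (tips \<Theta> h) = 1" shows "acc (fam \<Theta>)"
  unfolding acc_def
proof (intro ballI impI)
  fix f assume "f \<in> fam \<Theta>" "f \<noteq> Map.empty"
  then show "\<exists>x\<in>dom f. f(x:=None) \<in> fam \<Theta>"
    using acc_step[OF assms \<open>f \<in> fam \<Theta>\<close>, of Map.empty] empty_fam map_le_empty by metis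
qed

lemma maxExt_fam: assumes "Map.empty \<notin> \<Theta>" shows "maxExt \<Theta> = maxF (fam \<Theta>)"
proof -
  have e: "Ext \<Theta> = fam \<Theta> - {Map.empty}" using Ext_eq[OF assms] .
  show ?thesis unfolding maxExt_def maxF_def e
  proof (intro set_eqI iffI)
    fix k assume k: "k \<in> {k \<in> fam \<Theta> - {Map.empty}. \<forall>k'\<in>fam \<Theta> - {Map.empty}. k \<subseteq>\<^sub>m k' \<longrightarrow> k' = k}"
    show "k \<in> {k \<in> fam \<Theta>. k \<noteq> Map.empty \<and> (\<forall>k'\<in>fam \<Theta>. k \<subseteq>\<^sub>m k' \<longrightarrow> k' = k)}"
      using k le_empty_map by auto
  next
    fix k assume "k \<in> {k \<in> fam \<Theta>. k \<noteq> Map.empty \<and> (\<forall>k'\<in>fam \<Theta>. k \<subseteq>\<^sub>m k' \<longrightarrow> k' = k)}"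
    then show "k \<in> {k \<in> fam \<Theta> - {Map.empty}. \<forall>k'\<in>fam \<Theta> - {Map.empty}. k \<subseteq>\<^sub>m k' \<longrightarrow> k' = k}"
      by auto
  qed
qed

lemma fc_fam: "Map.empty \<notin> \<Theta> \<Longrightarrow> free_choice \<Theta> \<longleftrightarrow> fcF (fam \<Theta>)"
  unfolding free_choice_def fcF_def Tot_def events_fam inputs_fam by (simp add: maxExt_fam)

lemma space_le_fam: assumes "Map.empty \<notin> A" "Map.empty \<notin> B" shows "space_le A B \<longleftrightarrow> fam B \<subseteq> fam A"
  unfolding space_le_def Ext_eq[OF assms(1)] Ext_eq[OF assms(2)] using empty_fam by blast

lemma cc_iff: assumes "space \<Theta>"
  shows "causally_complete \<Theta> \<longleftrightarrow> fcF (fam \<Theta>) \<and> acc (fam \<Theta>) \<and> findom (fam \<Theta>)"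
proof -
  have vp: "vee_prime \<Theta>" and fin: "finite \<Theta>" using assms unfolding space_def by auto
  have e: "Map.empty \<notin> \<Theta>" using space_empty[OF assms] .
  show ?thesis unfolding causally_complete_def fc_fam[OF e]
    using acc_fam[OF fin] findom_fam[OF fin] cc_from_acc[OF vp] by blast
qed

lemma S_iff: assumes "Map.empty \<notin> X"
  shows "(space \<Theta>1 \<and> space_le \<Theta>1 X \<and> causally_complete \<Theta>1) \<longleftrightarrow> (space \<Theta>1 \<and> good X (fam \<Theta>1))"
proof (cases "space \<Theta>1")
  case True
  have e: "Map.empty \<notin> \<Theta>1" using space_empty[OF True] .
  have f: "finite (fam \<Theta>1)" using True finite_fam unfolding space_def by blast
  show ?thesis unfolding good_def cc_iff[OF True] space_le_fam[OF e assms] using True f fam_cl by blast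
qed simp

lemma good_cl: "good X F \<Longrightarrow> cl F" unfolding good_def by simp
lemma good_finite: "good X F \<Longrightarrow> finite F" unfolding good_def by simp

lemma good_irr: assumes "good X F" shows "space (irr F)" "fam (irr F) = F"
  using space_irr[OF good_finite[OF assms]] fam_irr[OF good_finite[OF assms] good_cl[OF assms]] by simp_all

lemma CC_char: assumes "Map.empty \<notin> X" shows "CC X = {\<Theta>1. space \<Theta>1 \<and> mingood X (fam \<Theta>1)}"
proof -
  let ?S = "{\<Theta>1. space \<Theta>1 \<and> space_le \<Theta>1 X \<and> causally_complete \<Theta>1}"
  have S: "?S = {\<Theta>1. space \<Theta>1 \<and> good X (fam \<Theta>1)}" using S_iff[OF assms] by blast
  have le: "\<And>A B. space A \<Longrightarrow> space B \<Longrightarrow> space_le A B \<longleftrightarrow> fam B \<subseteq> fam A"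
    using space_le_fam[OF space_empty space_empty] by assumption
  show ?thesis unfolding CC_def Let_def S
  proof (intro set_eqI iffI)
    fix \<Theta>1 assume a: "\<Theta>1 \<in> {\<Theta>1 \<in> {\<Theta>1. space \<Theta>1 \<and> good X (fam \<Theta>1)}.
               \<forall>\<Theta>2\<in>{\<Theta>1. space \<Theta>1 \<and> good X (fam \<Theta>1)}. space_le \<Theta>1 \<Theta>2 \<longrightarrow> space_le \<Theta>2 \<Theta>1}"
    then have sp: "space \<Theta>1" "good X (fam \<Theta>1)" by auto
    have "\<forall>F2. good X F2 \<longrightarrow> F2 \<subseteq> fam \<Theta>1 \<longrightarrow> fam \<Theta>1 = F2"
    proof (intro allI impI)
      fix F2 assume g: "good X F2" "F2 \<subseteq> fam \<Theta>1"
      have s2: "space (irr F2)" "fam (irr F2) = F2" using good_irr[OF g(1)] by auto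
      then have "irr F2 \<in> {\<Theta>1. space \<Theta>1 \<and> good X (fam \<Theta>1)}" using g(1) by simp
      moreover have "space_le \<Theta>1 (irr F2)" using le[OF sp(1) s2(1)] s2(2) g(2) by simp
      ultimately have "space_le (irr F2) \<Theta>1" using a by blast
      then have "fam \<Theta>1 \<subseteq> F2" using le[OF s2(1) sp(1)] s2(2) by simp
      then show "fam \<Theta>1 = F2" using g(2) by blast
    qed
    then show "\<Theta>1 \<in> {\<Theta>1. space \<Theta>1 \<and> mingood X (fam \<Theta>1)}" using sp unfolding mingood_def by blast
  next
    fix \<Theta>1 assume "\<Theta>1 \<in> {\<Theta>1. space \<Theta>1 \<and> mingood X (fam \<Theta>1)}"
    then have sp: "space \<Theta>1" "good X (fam \<Theta>1)"
      and m: "\<forall>F2. good X F2 \<longrightarrow> F2 \<subseteq> fam \<Theta>1 \<longrightarrow> fam \<Theta>1 = F2" unfolding mingood_def by auto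
    have "\<forall>\<Theta>2\<in>{\<Theta>1. space \<Theta>1 \<and> good X (fam \<Theta>1)}. space_le \<Theta>1 \<Theta>2 \<longrightarrow> space_le \<Theta>2 \<Theta>1"
    proof (intro ballI impI)
      fix \<Theta>2 assume t2: "\<Theta>2 \<in> {\<Theta>1. space \<Theta>1 \<and> good X (fam \<Theta>1)}" and l: "space_le \<Theta>1 \<Theta>2"
      then have s2: "space \<Theta>2" "good X (fam \<Theta>2)" by auto
      have "fam \<Theta>2 \<subseteq> fam \<Theta>1" using le[OF sp(1) s2(1)] l by simp
      then have "fam \<Theta>1 = fam \<Theta>2" using m s2(2) by blast
      then show "space_le \<Theta>2 \<Theta>1" using le[OF s2(1) sp(1)] by simp
    qed
    then show "\<Theta>1 \<in> {\<Theta>1 \<in> {\<Theta>1. space \<Theta>1 \<and> good X (fam \<Theta>1)}.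
               \<forall>\<Theta>2\<in>{\<Theta>1. space \<Theta>1 \<and> good X (fam \<Theta>1)}. space_le \<Theta>1 \<Theta>2 \<longrightarrow> space_le \<Theta>2 \<Theta>1}"
      using sp by blast
  qed
qed


definition cmp :: "('e \<rightharpoonup> 'v) set \<Rightarrow> ('e \<rightharpoonup> 'v) set \<Rightarrow> (('e \<rightharpoonup> 'v) \<Rightarrow> ('e \<rightharpoonup> 'v) set) \<Rightarrow> ('e \<rightharpoonup> 'v) set" where
  "cmp F0 K G = F0 \<union> {k ++ g | k g. k \<in> K \<and> g \<in> G k}"

lemma cmp_cases: assumes "f \<in> cmp F0 K G" obtains "f \<in> F0" | k g where "k \<in> K" "g \<in> G k" "f = k ++ g"
  using assms unfolding cmp_def by blast

lemma cmp_I1: "f \<in> F0 \<Longrightarrow> f \<in> cmp F0 K G" unfolding cmp_def by blast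
lemma cmp_I2: "k \<in> K \<Longrightarrow> g \<in> G k \<Longrightarrow> k ++ g \<in> cmp F0 K G" unfolding cmp_def by blast

lemma le_add_left: "dom a \<inter> dom b = {} \<Longrightarrow> a \<subseteq>\<^sub>m a ++ b"
  by (metis map_add_comm map_le_map_add)

lemma le_add_right: "b \<subseteq>\<^sub>m a ++ b" by simp

lemma le_same_dom: assumes "k2 \<subseteq>\<^sub>m f" "k \<subseteq>\<^sub>m f" "dom k2 = dom k" shows "k2 = k"
proof
  fix x show "k2 x = k x"
  proof (cases "x \<in> dom k")
    case True
    then have "k2 x = f x" "k x = f x" using assms unfolding map_le_def by auto
    then show ?thesis by simp
  next
    case False
    then have "x \<notin> dom k2" using assms(3) by simp
    then show ?thesis using False by (simp add: domIff)
  qed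
qed

lemma le_add_cancel: assumes "b2 \<subseteq>\<^sub>m k ++ b" "dom b2 \<inter> dom k = {}" shows "b2 \<subseteq>\<^sub>m b"
  unfolding map_le_def
proof
  fix a assume a: "a \<in> dom b2"
  then have e: "b2 a = (k ++ b) a" using assms(1) unfolding map_le_def by blast
  have "a \<notin> dom k" using a assms(2) by blast
  then have "k a = None" by (simp add: domIff)
  then show "b2 a = b a" using e by (simp add: map_add_def split: option.splits)
qed

lemma add_mono_right: assumes "b \<subseteq>\<^sub>m g" "dom g \<inter> dom k = {}" shows "k ++ b \<subseteq>\<^sub>m k ++ g"
  unfolding map_le_def
proof
  fix a assume a: "a \<in> dom (k ++ b)"
  show "(k ++ b) a = (k ++ g) a"
  proof (cases "b a")
    case None
    then have "a \<in> dom k" using a by auto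
    then have "g a = None" using assms(2) by (auto simp: domIff)
    then show ?thesis using None by (simp add: map_add_def)
  next
    case (Some y)
    then have "g a = Some y" using assms(1) unfolding map_le_def by (metis domI)
    then show ?thesis using Some by (simp add: map_add_def)
  qed
qed

lemma add_restrict: assumes "k \<subseteq>\<^sub>m f" "dom k = E" shows "f = k ++ (f |` (-E))"
proof
  fix x show "f x = (k ++ (f |` (-E))) x"
  proof (cases "x \<in> E")
    case True
    then have "x \<in> dom k" using assms(2) by simp
    then have "k x = f x" using assms(1) unfolding map_le_def by blast
    then show ?thesis using True by (simp add: map_add_def)
  next
    case False
    then have "k x = None" using assms(2) by (auto simp: domIff)
    then show ?thesis using False by (simp add: map_add_def split: option.splits)
  qed
qed

lemma restrict_add: assumes "dom g \<inter> E = {}" "dom k = E" shows "(k ++ g) |` (-E) = g"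
proof
  fix x show "((k ++ g) |` (-E)) x = g x"
  proof (cases "x \<in> E")
    case True
    then have "g x = None" using assms(1) by (auto simp: domIff)
    then show ?thesis using True by simp
  next
    case False
    then have "k x = None" using assms(2) by (auto simp: domIff)
    then show ?thesis using False by (simp add: map_add_def split: option.splits)
  qed
qed

lemma upd_add: "x \<notin> dom k \<Longrightarrow> (k ++ g)(x := None) = k ++ g(x := None)"
  by (rule ext) (auto simp: map_add_def domIff split: option.splits)

lemma cov_comp:
  assumes c: "cov (cmp F0 K G) f"
    and dF0: "\<forall>a\<in>F0. dom a \<subseteq> E" and dK: "\<forall>k\<in>K. dom k = E" and dG: "\<forall>k\<in>K. \<forall>g\<in>G k. dom g \<inter> E = {}"
  shows "cov F0 f \<or> (\<exists>k\<in>K. k \<subseteq>\<^sub>m f \<and> f = k ++ (f |` (-E)) \<and> cov (G k) (f |` (-E)))"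
proof (cases "\<exists>k\<in>K. \<exists>g\<in>G k. k ++ g \<subseteq>\<^sub>m f")
  case True
  then obtain k g where kg: "k \<in> K" "g \<in> G k" "k ++ g \<subseteq>\<^sub>m f" by blast
  have dkg0: "dom k = E" "dom g \<inter> E = {}" using bspec[OF dK kg(1)] bspec[OF bspec[OF dG kg(1)] kg(2)] by simp_all
  have dkg: "dom k \<inter> dom g = {}" using dkg0 by (simp add: Int_commute)
  have kf: "k \<subseteq>\<^sub>m f" using map_le_trans[OF le_add_left[OF dkg] kg(3)] .
  have dk: "dom k = E" using bspec[OF dK kg(1)] .
  have eq: "f = k ++ (f |` (-E))" using add_restrict[OF kf dk] .
  have "cov (G k) (f |` (-E))" unfolding cov_def
  proof
    fix y assume y: "y \<in> dom (f |` (-E))"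
    then have yf: "y \<in> dom f" and yE: "y \<notin> E" by auto
    obtain cc where cc: "cc \<in> cmp F0 K G" "cc \<subseteq>\<^sub>m f" "y \<in> dom cc" using covE[OF c yf] by blast
    show "\<exists>h\<in>G k. h \<subseteq>\<^sub>m f |` (-E) \<and> y \<in> dom h"
    proof (rule cmp_cases[OF cc(1)])
      assume "cc \<in> F0" then have "dom cc \<subseteq> E" using bspec[OF dF0] by simp
      then show ?thesis using cc(3) yE by blast
    next
      fix k2 g2 assume k2: "k2 \<in> K" "g2 \<in> G k2" "cc = k2 ++ g2"
      have d20: "dom k2 = E" "dom g2 \<inter> E = {}" using bspec[OF dK k2(1)] bspec[OF bspec[OF dG k2(1)] k2(2)] by simp_all
      have d2: "dom k2 \<inter> dom g2 = {}" using d20 by (simp add: Int_commute)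
      have "k2 \<subseteq>\<^sub>m f" using map_le_trans[OF le_add_left[OF d2]] k2(3) cc(2) by simp
      moreover have "dom k2 = dom k" using d20(1) dk by simp
      ultimately have kk: "k2 = k" using le_same_dom kf by blast
      have "g2 \<subseteq>\<^sub>m f" using map_le_trans[OF le_add_right] k2(3) cc(2) by simp
      moreover have "dom g2 \<subseteq> -E" using d20(2) by blast
      ultimately have "g2 \<subseteq>\<^sub>m f |` (-E)" by (rule le_restrict)
      moreover have "y \<in> dom g2" using cc(3) k2(3) yE d20(1) by auto
      ultimately show ?thesis using k2(2) kk by blast
    qed
  qed
  then show ?thesis using kg(1) kf eq by blast
next
  case False
  have "cov F0 f" unfolding cov_def
  proof
    fix y assume yf: "y \<in> dom f"
    obtain cc where cc: "cc \<in> cmp F0 K G" "cc \<subseteq>\<^sub>m f" "y \<in> dom cc" using covE[OF c yf] by blast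
    show "\<exists>h\<in>F0. h \<subseteq>\<^sub>m f \<and> y \<in> dom h"
    proof (rule cmp_cases[OF cc(1)])
      assume "cc \<in> F0" then show ?thesis using cc(2,3) by blast
    next
      fix k2 g2 assume k2: "k2 \<in> K" "g2 \<in> G k2" "cc = k2 ++ g2"
      then show ?thesis using False cc(2) by blast
    qed
  qed
  then show ?thesis by blast
qed

lemma dom_cov_disj: assumes "cov B g" "\<forall>b\<in>B. dom b \<inter> E = {}" shows "dom g \<inter> E = {}"
proof -
  have "\<And>y. y \<in> dom g \<Longrightarrow> y \<notin> E"
  proof -
    fix y assume "y \<in> dom g"
    then obtain b where "b \<in> B" "b \<subseteq>\<^sub>m g" "y \<in> dom b" using covE[OF assms(1)] by blast
    then show "y \<notin> E" using assms(2) by blast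
  qed
  then show ?thesis by blast
qed

lemma cov_comp_rev:
  assumes k: "k \<in> K" and ck: "cov F0 k" and cg: "cov (G k) g" and dk: "dom k = E"
    and dG: "\<forall>g'\<in>G k. dom g' \<inter> E = {}"
  shows "cov (cmp F0 K G) (k ++ g)"
  unfolding cov_def
proof
  have dg: "dom g \<inter> E = {}" using dom_cov_disj[OF cg dG] .
  fix y assume y: "y \<in> dom (k ++ g)"
  show "\<exists>h\<in>cmp F0 K G. h \<subseteq>\<^sub>m k ++ g \<and> y \<in> dom h"
  proof (cases "y \<in> dom g")
    case True
    then obtain b where b: "b \<in> G k" "b \<subseteq>\<^sub>m g" "y \<in> dom b" using covE[OF cg] by blast
    have "k ++ b \<subseteq>\<^sub>m k ++ g" using add_mono_right[OF b(2)] dg dk by blast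
    moreover have "k ++ b \<in> cmp F0 K G" using cmp_I2[where G=G, OF k b(1)] .
    moreover have "y \<in> dom (k ++ b)" using b(3) by simp
    ultimately show ?thesis by (intro bexI[of _ "k ++ b"] conjI)
  next
    case False
    then have "y \<in> dom k" using y by simp
    then obtain a where a: "a \<in> F0" "a \<subseteq>\<^sub>m k" "y \<in> dom a" using covE[OF ck] by blast
    have "k \<subseteq>\<^sub>m k ++ g" using le_add_left dg dk by blast
    then have "a \<subseteq>\<^sub>m k ++ g" using map_le_trans[OF a(2)] by blast
    then show ?thesis using a(1,3) cmp_I1 by blast
  qed
qed

lemma fam_comp:
  assumes dA: "\<forall>a\<in>A. dom a \<subseteq> E" and dK: "\<forall>k\<in>K. dom k = E" and dB: "\<forall>k\<in>K. \<forall>b\<in>B k. dom b \<inter> E = {}"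
    and KA: "K \<subseteq> fam A"
  shows "fam (cmp A K B) = cmp (fam A) K (\<lambda>k. fam (B k))"
proof (intro set_eqI iffI)
  fix f assume "f \<in> fam (cmp A K B)"
  then have c: "cov (cmp A K B) f" by (rule famD)
  from cov_comp[OF c dA dK dB]
  show "f \<in> cmp (fam A) K (\<lambda>k. fam (B k))"
  proof
    assume "cov A f" then show ?thesis using cmp_I1 famI by metis
  next
    assume "\<exists>k\<in>K. k \<subseteq>\<^sub>m f \<and> f = k ++ (f |` (-E)) \<and> cov (B k) (f |` (-E))"
    then obtain k where k: "k \<in> K" "f = k ++ (f |` (-E))" "cov (B k) (f |` (-E))" by blast
    have "k ++ (f |` (-E)) \<in> cmp (fam A) K (\<lambda>k. fam (B k))" using cmp_I2[where G="\<lambda>k. fam (B k)", OF k(1) famI[OF k(3)]] .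
    then show ?thesis using k(2) by simp
  qed
next
  fix f assume "f \<in> cmp (fam A) K (\<lambda>k. fam (B k))"
  then show "f \<in> fam (cmp A K B)"
  proof (rule cmp_cases)
    assume "f \<in> fam A"
    moreover have "A \<subseteq> cmp A K B" unfolding cmp_def by blast
    ultimately show ?thesis using fam_mono by blast
  next
    fix k g assume kg: "k \<in> K" "g \<in> fam (B k)" "f = k ++ g"
    have "cov (cmp A K B) (k ++ g)"
      by (rule cov_comp_rev[OF kg(1)]) (use KA kg famD bspec[OF dK kg(1)] bspec[OF dB kg(1)] in auto)
    then show ?thesis using kg(3) famI by simp
  qed
qed

lemma cseq_comp: assumes dK: "\<forall>k\<in>maxExt A. dom k = E" and dB: "\<forall>k\<in>maxExt A. \<forall>b\<in>B k. dom b \<inter> E = {}"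
  shows "cseq A B = cmp A (maxExt A) B"
proof -
  have "{pjoin {k, h'} |k h'. k \<in> maxExt A \<and> h' \<in> B k} = {k ++ g |k g. k \<in> maxExt A \<and> g \<in> B k}"
  proof (intro set_eqI iffI)
    fix x assume "x \<in> {pjoin {k, h'} |k h'. k \<in> maxExt A \<and> h' \<in> B k}"
    then obtain k h' where kh: "x = pjoin {k, h'}" "k \<in> maxExt A" "h' \<in> B k" by blast
    have "dom k = E" "dom h' \<inter> E = {}" using bspec[OF dK kh(2)] bspec[OF bspec[OF dB kh(2)] kh(3)] by simp_all
    then have "dom k \<inter> dom h' = {}" by (simp add: Int_commute)
    then have "x = k ++ h'" using kh(1) pjoin_pair[of k h'] by simp
    then show "x \<in> {k ++ g |k g. k \<in> maxExt A \<and> g \<in> B k}" using kh(2,3) by blast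
  next
    fix x assume "x \<in> {k ++ g |k g. k \<in> maxExt A \<and> g \<in> B k}"
    then obtain k h' where kh: "x = k ++ h'" "k \<in> maxExt A" "h' \<in> B k" by blast
    have "dom k = E" "dom h' \<inter> E = {}" using bspec[OF dK kh(2)] bspec[OF bspec[OF dB kh(2)] kh(3)] by simp_all
    then have "dom k \<inter> dom h' = {}" by (simp add: Int_commute)
    then have "x = pjoin {k, h'}" using kh(1) pjoin_pair[of k h'] by simp
    then show "x \<in> {pjoin {k, h'} |k h'. k \<in> maxExt A \<and> h' \<in> B k}" using kh(2,3) by blast
  qed
  then show ?thesis unfolding cseq_def cmp_def by simp
qed

lemma cl_comp:
  assumes cl0: "cl F0" and clG: "\<forall>k\<in>K. cl (G k)" and KF: "K \<subseteq> F0"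
    and dF0: "\<forall>a\<in>F0. dom a \<subseteq> E" and dK: "\<forall>k\<in>K. dom k = E" and dG: "\<forall>k\<in>K. \<forall>g\<in>G k. dom g \<inter> E = {}"
  shows "cl (cmp F0 K G)"
  unfolding cl_def
proof (intro allI impI)
  fix f assume c: "cov (cmp F0 K G) f"
  from cov_comp[OF c dF0 dK dG] show "f \<in> cmp F0 K G"
  proof
    assume "cov F0 f" then show ?thesis using cl0 cmp_I1 unfolding cl_def by metis
  next
    assume "\<exists>k\<in>K. k \<subseteq>\<^sub>m f \<and> f = k ++ (f |` (-E)) \<and> cov (G k) (f |` (-E))"
    then obtain k where k: "k \<in> K" "f = k ++ (f |` (-E))" "cov (G k) (f |` (-E))" by blast
    have "f |` (-E) \<in> G k" using clG k(1,3) unfolding cl_def by blast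
    then have "k ++ (f |` (-E)) \<in> cmp F0 K G" using cmp_I2[where G=G, OF k(1)] by blast
    then show ?thesis using k(2) by simp
  qed
qed

lemma acc_comp:
  assumes acc0: "acc F0" and accG: "\<forall>k\<in>K. acc (G k)" and KF: "K \<subseteq> F0"
    and dK: "\<forall>k\<in>K. dom k = E" and dG: "\<forall>k\<in>K. \<forall>g\<in>G k. dom g \<inter> E = {}"
  shows "acc (cmp F0 K G)"
  unfolding acc_def
proof (intro ballI impI)
  fix f assume f: "f \<in> cmp F0 K G" "f \<noteq> Map.empty"
  show "\<exists>x\<in>dom f. f(x := None) \<in> cmp F0 K G"
  proof (rule cmp_cases[OF f(1)])
    assume "f \<in> F0"
    then obtain x where "x \<in> dom f" "f(x:=None) \<in> F0" using acc0 f(2) unfolding acc_def by blast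
    then show ?thesis using cmp_I1 by blast
  next
    fix k g assume kg: "k \<in> K" "g \<in> G k" "f = k ++ g"
    show ?thesis
    proof (cases "g = Map.empty")
      case True
      then have "f = k" using kg(3) by simp
      then have "f \<in> F0" using KF kg(1) by blast
      then obtain x where "x \<in> dom f" "f(x:=None) \<in> F0" using acc0 f(2) unfolding acc_def by blast
      then show ?thesis using cmp_I1 by blast
    next
      case False
      then obtain x where x: "x \<in> dom g" "g(x:=None) \<in> G k" using accG kg(1,2) unfolding acc_def by blast
      have "x \<notin> dom k" using x(1) bspec[OF dK kg(1)] bspec[OF bspec[OF dG kg(1)] kg(2)] by blast
      then have "f(x:=None) = k ++ g(x:=None)" using kg(3) upd_add by simp
      moreover have "x \<in> dom f" using x(1) kg(3) by simp
      moreover have "k ++ g(x:=None) \<in> cmp F0 K G" using cmp_I2[where G=G, OF kg(1) x(2)] .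
      ultimately show ?thesis by metis
    qed
  qed
qed

lemma findom_comp:
  assumes "findom F0" "\<forall>k\<in>K. findom (G k)" "K \<subseteq> F0"
  shows "findom (cmp F0 K G)"
  unfolding findom_def
proof
  fix f assume "f \<in> cmp F0 K G"
  then show "finite (dom f)"
  proof (rule cmp_cases)
    assume "f \<in> F0" then show ?thesis using assms(1) unfolding findom_def by blast
  next
    fix k g assume kg: "k \<in> K" "g \<in> G k" "f = k ++ g"
    have "finite (dom k)" using assms(1,3) kg(1) unfolding findom_def by blast
    moreover have "finite (dom g)" using assms(2) kg(1,2) unfolding findom_def by blast
    ultimately show ?thesis using kg(3) by simp
  qed
qed

lemma finite_comp:
  assumes "finite F0" "finite K" "\<forall>k\<in>K. finite (G k)"
  shows "finite (cmp F0 K G)"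
proof -
  have "{k ++ g |k g. k \<in> K \<and> g \<in> G k} = (\<lambda>(k,g). k ++ g) ` (SIGMA k:K. G k)" by auto
  moreover have "finite (SIGMA k:K. G k)" using assms(2,3) by blast
  ultimately show ?thesis unfolding cmp_def using assms(1) by simp
qed

lemma cmp_mono: "F0 \<subseteq> F0' \<Longrightarrow> (\<forall>k\<in>K. G k \<subseteq> G' k) \<Longrightarrow> cmp F0 K G \<subseteq> cmp F0' K G'"
  unfolding cmp_def by blast


lemma exists_max_above: assumes fin: "finite F" shows "f \<in> F \<Longrightarrow> f \<noteq> Map.empty \<Longrightarrow> \<exists>m\<in>maxF F. f \<subseteq>\<^sub>m m"
proof (induct f rule: measure_induct_rule[of "\<lambda>f. card {g\<in>F. f \<subseteq>\<^sub>m g}"])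
  case (less f)
  show ?case
  proof (cases "\<forall>k'\<in>F. f \<subseteq>\<^sub>m k' \<longrightarrow> k' = f")
    case True
    then have "f \<in> maxF F" unfolding maxF_def using less.prems by blast
    then show ?thesis using map_le_refl by blast
  next
    case False
    then obtain g where g: "g \<in> F" "f \<subseteq>\<^sub>m g" "g \<noteq> f" by blast
    have s1: "{h\<in>F. g \<subseteq>\<^sub>m h} \<subseteq> {h\<in>F. f \<subseteq>\<^sub>m h}"
    proof
      fix h assume "h \<in> {h\<in>F. g \<subseteq>\<^sub>m h}"
      then show "h \<in> {h\<in>F. f \<subseteq>\<^sub>m h}" using map_le_trans[OF g(2)] by blast
    qed
    have "\<not> g \<subseteq>\<^sub>m f" using g(2,3) map_le_antisym by metis
    then have "f \<notin> {h\<in>F. g \<subseteq>\<^sub>m h}" by blast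
    moreover have "f \<in> {h\<in>F. f \<subseteq>\<^sub>m h}" using less.prems(1) map_le_refl by blast
    ultimately have "{h\<in>F. g \<subseteq>\<^sub>m h} \<subset> {h\<in>F. f \<subseteq>\<^sub>m h}" using s1 by blast
    then have lt: "card {h\<in>F. g \<subseteq>\<^sub>m h} < card {h\<in>F. f \<subseteq>\<^sub>m h}"
      using psubset_card_mono fin by (metis (no_types, lifting) finite_subset mem_Collect_eq subsetI)
    have "g \<noteq> Map.empty" using g(2) less.prems(2) le_empty_map by metis
    then obtain m where "m \<in> maxF F" "g \<subseteq>\<^sub>m m" using less.hyps[OF lt g(1)] by blast
    then show ?thesis using map_le_trans[OF g(2)] by blast
  qed
qed

lemma maxF_sub: "maxF F \<subseteq> F" unfolding maxF_def by blast
lemma maxF_ne: "k \<in> maxF F \<Longrightarrow> k \<noteq> Map.empty" unfolding maxF_def by blast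
lemma maxF_max: "k \<in> maxF F \<Longrightarrow> k' \<in> F \<Longrightarrow> k \<subseteq>\<^sub>m k' \<Longrightarrow> k' = k" unfolding maxF_def by blast
lemma maxF_I: "k \<in> F \<Longrightarrow> k \<noteq> Map.empty \<Longrightarrow> (\<And>k'. k' \<in> F \<Longrightarrow> k \<subseteq>\<^sub>m k' \<Longrightarrow> k' = k) \<Longrightarrow> k \<in> maxF F"
  unfolding maxF_def by blast

lemma Tot_dom: "k \<in> Tot E I \<Longrightarrow> dom k = E" unfolding Tot_def by blast

lemma inputs_out: "\<omega> \<notin> events X \<Longrightarrow> inputs X \<omega> = {}"
  unfolding events_def inputs_def by blast

lemma inputs_ne: "\<omega> \<in> events X \<Longrightarrow> inputs X \<omega> \<noteq> {}"
  unfolding events_def inputs_def by blast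

lemma dom_events: "h \<in> X \<Longrightarrow> dom h \<subseteq> events X"
  unfolding events_def by blast

lemma inputsI: "h \<in> X \<Longrightarrow> h \<omega> = Some v \<Longrightarrow> v \<in> inputs X \<omega>"
  unfolding inputs_def by blast

lemma eventsI: "h \<in> X \<Longrightarrow> x \<in> dom h \<Longrightarrow> x \<in> events X"
  unfolding events_def by blast

lemma Tot_ne: assumes "\<forall>\<omega>\<in>E. I \<omega> \<noteq> {}" shows "Tot E I \<noteq> {}"
proof -
  define f where "f = (\<lambda>\<omega>. if \<omega> \<in> E then Some (SOME v. v \<in> I \<omega>) else None)"
  have "dom f = E" unfolding f_def by (auto split: if_splits)
  moreover have "\<forall>\<omega>\<in>E. the (f \<omega>) \<in> I \<omega>"
  proof
    fix \<omega> assume w: "\<omega> \<in> E"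
    then have "\<exists>v. v \<in> I \<omega>" using assms by blast
    then have "(SOME v. v \<in> I \<omega>) \<in> I \<omega>" by (rule someI_ex)
    then show "the (f \<omega>) \<in> I \<omega>" using w unfolding f_def by simp
  qed
  ultimately have "f \<in> Tot E I" unfolding Tot_def by blast
  then show ?thesis by blast
qed

lemma Tot_prod:
  assumes d: "E \<inter> E' = {}" and o1: "\<forall>\<omega>. \<omega> \<notin> E \<longrightarrow> I \<omega> = {}" and o2: "\<forall>\<omega>. \<omega> \<notin> E' \<longrightarrow> I' \<omega> = {}"
  shows "Tot (E \<union> E') (\<lambda>\<omega>. I \<omega> \<union> I' \<omega>) = {k ++ m | k m. k \<in> Tot E I \<and> m \<in> Tot E' I'}"
proof (intro set_eqI iffI)
  fix f assume f: "f \<in> Tot (E \<union> E') (\<lambda>\<omega>. I \<omega> \<union> I' \<omega>)"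
  then have df: "dom f = E \<union> E'" and vf: "\<forall>\<omega>\<in>E \<union> E'. the (f \<omega>) \<in> I \<omega> \<union> I' \<omega>" unfolding Tot_def by auto
  define k where "k = f |` E"
  define m where "m = f |` E'"
  have "dom k = E" unfolding k_def using df by auto
  moreover have "\<forall>\<omega>\<in>E. the (k \<omega>) \<in> I \<omega>"
  proof
    fix \<omega> assume w: "\<omega> \<in> E"
    then have "\<omega> \<notin> E'" using d by blast
    then have "I' \<omega> = {}" using o2 by blast
    then show "the (k \<omega>) \<in> I \<omega>" using vf w unfolding k_def by auto
  qed
  ultimately have k: "k \<in> Tot E I" unfolding Tot_def by blast
  have "dom m = E'" unfolding m_def using df by auto
  moreover have "\<forall>\<omega>\<in>E'. the (m \<omega>) \<in> I' \<omega>"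
  proof
    fix \<omega> assume w: "\<omega> \<in> E'"
    then have "\<omega> \<notin> E" using d by blast
    then have "I \<omega> = {}" using o1 by blast
    then show "the (m \<omega>) \<in> I' \<omega>" using vf w unfolding m_def by auto
  qed
  ultimately have m: "m \<in> Tot E' I'" unfolding Tot_def by blast
  have "f = k ++ m"
  proof
    fix \<omega> show "f \<omega> = (k ++ m) \<omega>"
    proof (cases "\<omega> \<in> E'")
      case True
      then have "\<omega> \<in> dom f" using df by blast
      then obtain y where "f \<omega> = Some y" by blast
      then show ?thesis using True unfolding m_def by (simp add: map_add_def)
    next
      case False
      then have "m \<omega> = None" unfolding m_def by simp
      then have e: "(k ++ m) \<omega> = k \<omega>" by (simp add: map_add_def)
      show ?thesis
      proof (cases "\<omega> \<in> E")
        case True then show ?thesis using e unfolding k_def by simp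
      next
        case n: False
        then have "\<omega> \<notin> dom f" using df False by blast
        then have "f \<omega> = None" by (simp add: domIff)
        moreover have "k \<omega> = None" unfolding k_def using n by simp
        ultimately show ?thesis using e by (simp add: map_add_def)
      qed
    qed
  qed
  then show "f \<in> {k ++ m | k m. k \<in> Tot E I \<and> m \<in> Tot E' I'}" using k m by blast
next
  fix f assume "f \<in> {k ++ m | k m. k \<in> Tot E I \<and> m \<in> Tot E' I'}"
  then obtain k m where km: "f = k ++ m" "k \<in> Tot E I" "m \<in> Tot E' I'" by blast
  have dk: "dom k = E" and vk: "\<forall>\<omega>\<in>E. the (k \<omega>) \<in> I \<omega>" using km(2) unfolding Tot_def by auto
  have dm: "dom m = E'" and vm: "\<forall>\<omega>\<in>E'. the (m \<omega>) \<in> I' \<omega>" using km(3) unfolding Tot_def by auto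
  have "dom f = E \<union> E'" using km(1) dk dm by auto
  moreover have "\<forall>\<omega>\<in>E \<union> E'. the (f \<omega>) \<in> I \<omega> \<union> I' \<omega>"
  proof
    fix \<omega> assume w: "\<omega> \<in> E \<union> E'"
    show "the (f \<omega>) \<in> I \<omega> \<union> I' \<omega>"
    proof (cases "\<omega> \<in> E'")
      case True
      then obtain y where "m \<omega> = Some y" using dm by blast
      then have "f \<omega> = m \<omega>" using km(1) by (simp add: map_add_def)
      then show ?thesis using vm True by simp
    next
      case False
      then have "m \<omega> = None" using dm by (auto simp: domIff)
      then have "f \<omega> = k \<omega>" using km(1) by (simp add: map_add_def)
      moreover have "\<omega> \<in> E" using w False by blast
      ultimately show ?thesis using vk by simp
    qed
  qed
  ultimately show "f \<in> Tot (E \<union> E') (\<lambda>\<omega>. I \<omega> \<union> I' \<omega>)" unfolding Tot_def by blast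
qed

lemma events_cmp: assumes "K \<subseteq> F0" shows "events (cmp F0 K G) = events F0 \<union> (\<Union>k\<in>K. events (G k))"
proof (intro set_eqI iffI)
  fix x assume "x \<in> events (cmp F0 K G)"
  then obtain f where f: "f \<in> cmp F0 K G" "x \<in> dom f" unfolding events_def by blast
  from f(1) show "x \<in> events F0 \<union> (\<Union>k\<in>K. events (G k))"
  proof (rule cmp_cases)
    assume f0: "f \<in> F0" show ?thesis using eventsI[OF f0 f(2)] by (rule UnI1)
  next
    fix k g assume kg: "k \<in> K" "g \<in> G k" "f = k ++ g"
    then have "x \<in> dom g \<or> x \<in> dom k" using f(2) by auto
    then show ?thesis
    proof
      assume "x \<in> dom g" then have "x \<in> events (G k)" by (rule eventsI[OF kg(2)])
      then show ?thesis using kg(1) by (intro UnI2 UN_I)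
    next
      assume xk: "x \<in> dom k" show ?thesis using eventsI[OF subsetD[OF assms kg(1)] xk] by (rule UnI1)
    qed
  qed
next
  fix x assume "x \<in> events F0 \<union> (\<Union>k\<in>K. events (G k))"
  then show "x \<in> events (cmp F0 K G)"
  proof
    assume "x \<in> events F0"
    then obtain f where "f \<in> F0" "x \<in> dom f" unfolding events_def by blast
    then show ?thesis by (rule eventsI[OF cmp_I1[of f F0 K G]])
  next
    assume "x \<in> (\<Union>k\<in>K. events (G k))"
    then obtain k g where kg: "k \<in> K" "g \<in> G k" "x \<in> dom g" unfolding events_def by blast
    then have "x \<in> dom (k ++ g)" by simp
    then show ?thesis by (rule eventsI[OF cmp_I2[of k K g G F0, OF kg(1,2)]])
  qed
qed

lemma inputs_cmp: assumes "K \<subseteq> F0" shows "inputs (cmp F0 K G) \<omega> = inputs F0 \<omega> \<union> (\<Union>k\<in>K. inputs (G k) \<omega>)"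
proof (intro set_eqI iffI)
  fix v assume "v \<in> inputs (cmp F0 K G) \<omega>"
  then obtain f where f: "f \<in> cmp F0 K G" "f \<omega> = Some v" unfolding inputs_def by blast
  from f(1) show "v \<in> inputs F0 \<omega> \<union> (\<Union>k\<in>K. inputs (G k) \<omega>)"
  proof (rule cmp_cases)
    assume f0: "f \<in> F0" show ?thesis using inputsI[OF f0 f(2)] by (rule UnI1)
  next
    fix k g assume kg: "k \<in> K" "g \<in> G k" "f = k ++ g"
    then have "g \<omega> = Some v \<or> k \<omega> = Some v" using f(2) by (auto simp: map_add_def split: option.splits)
    then show ?thesis
    proof
      assume "g \<omega> = Some v" then have "v \<in> inputs (G k) \<omega>" by (rule inputsI[OF kg(2)])
      then show ?thesis using kg(1) by (intro UnI2 UN_I)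
    next
      assume xk: "k \<omega> = Some v" show ?thesis using inputsI[OF subsetD[OF assms kg(1)] xk] by (rule UnI1)
    qed
  qed
next
  fix v assume "v \<in> inputs F0 \<omega> \<union> (\<Union>k\<in>K. inputs (G k) \<omega>)"
  then show "v \<in> inputs (cmp F0 K G) \<omega>"
  proof
    assume "v \<in> inputs F0 \<omega>"
    then obtain f where "f \<in> F0" "f \<omega> = Some v" unfolding inputs_def by blast
    then show ?thesis by (rule inputsI[OF cmp_I1[of f F0 K G]])
  next
    assume "v \<in> (\<Union>k\<in>K. inputs (G k) \<omega>)"
    then obtain k g where kg: "k \<in> K" "g \<in> G k" "g \<omega> = Some v" unfolding inputs_def by blast
    then have "(k ++ g) \<omega> = Some v" by simp
    then show ?thesis by (rule inputsI[OF cmp_I2[of k K g G F0, OF kg(1,2)]])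
  qed
qed


lemma disj_sub_empty: "dom g \<subseteq> E \<Longrightarrow> dom g \<inter> E = {} \<Longrightarrow> g = Map.empty"
proof -
  assume "dom g \<subseteq> E" "dom g \<inter> E = {}"
  then have "dom g = {}" by blast
  then show "g = Map.empty" by simp
qed

lemma maxF_cmp:
  assumes fin0: "finite F0" and finG: "\<forall>k\<in>K. finite (G k)" and K: "K = maxF F0"
    and dF0: "\<forall>a\<in>F0. dom a \<subseteq> E" and dK: "\<forall>k\<in>K. dom k = E" and dG: "\<forall>k\<in>K. \<forall>g\<in>G k. dom g \<inter> E = {}"
    and neG: "\<forall>k\<in>K. \<exists>g\<in>G k. g \<noteq> Map.empty"
  shows "maxF (cmp F0 K G) = {k ++ m | k m. k \<in> K \<and> m \<in> maxF (G k)}"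
proof (intro set_eqI iffI)
  fix f assume f: "f \<in> maxF (cmp F0 K G)"
  have fc: "f \<in> cmp F0 K G" using f maxF_sub by blast
  have fne: "f \<noteq> Map.empty" using maxF_ne[OF f] .
  have mx: "\<And>f'. f' \<in> cmp F0 K G \<Longrightarrow> f \<subseteq>\<^sub>m f' \<Longrightarrow> f' = f" using maxF_max[OF f] by blast
  show "f \<in> {k ++ m | k m. k \<in> K \<and> m \<in> maxF (G k)}"
  proof (rule cmp_cases[OF fc])
    assume f0: "f \<in> F0"
    obtain k where k: "k \<in> maxF F0" "f \<subseteq>\<^sub>m k" using exists_max_above[OF fin0 f0 fne] by blast
    have kK: "k \<in> K" using k(1) K by simp
    obtain g0 where g0: "g0 \<in> G k" "g0 \<noteq> Map.empty" using bspec[OF neG kK] by blast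
    have dk: "dom k = E" using bspec[OF dK kK] .
    have dg0: "dom g0 \<inter> E = {}" using bspec[OF bspec[OF dG kK] g0(1)] .
    have "dom k \<inter> dom g0 = {}" using dk dg0 by (simp add: Int_commute)
    then have "k \<subseteq>\<^sub>m k ++ g0" by (rule le_add_left)
    then have "f \<subseteq>\<^sub>m k ++ g0" using map_le_trans[OF k(2)] by blast
    then have e: "k ++ g0 = f" using mx[OF cmp_I2[of k K g0 G F0, OF kK g0(1)]] by blast
    have de: "dom g0 \<union> dom k = dom f" using arg_cong[OF e, of dom] by simp
    have "dom g0 \<subseteq> dom f" using Un_upper1[of "dom g0" "dom k"] de by simp
    moreover have "dom f \<subseteq> E" using bspec[OF dF0 f0] .
    ultimately have "g0 = Map.empty" using disj_sub_empty dg0 by blast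
    then show ?thesis using g0(2) by blast
  next
    fix k g assume kg: "k \<in> K" "g \<in> G k" "f = k ++ g"
    obtain g0 where g0: "g0 \<in> G k" "g0 \<noteq> Map.empty" using bspec[OF neG kg(1)] by blast
    have dk: "dom k = E" using bspec[OF dK kg(1)] .
    have dg0: "dom g0 \<inter> E = {}" using bspec[OF bspec[OF dG kg(1)] g0(1)] .
    have dg: "dom g \<inter> E = {}" using bspec[OF bspec[OF dG kg(1)] kg(2)] .
    show ?thesis
    proof (cases "g = Map.empty")
      case True
      then have fk: "f = k" using kg(3) by simp
      have "dom k \<inter> dom g0 = {}" using dk dg0 by (simp add: Int_commute)
      then have "k \<subseteq>\<^sub>m k ++ g0" by (rule le_add_left)
      then have e: "k ++ g0 = f" using mx[OF cmp_I2[of k K g0 G F0, OF kg(1) g0(1)]] fk by blast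
      have de: "dom g0 \<union> dom k = dom f" using arg_cong[OF e, of dom] by simp
      have "dom g0 \<subseteq> dom k" using Un_upper1[of "dom g0" "dom k"] de fk by simp
      then have "g0 = Map.empty" using disj_sub_empty dg0 dk by blast
      then show ?thesis using g0(2) by blast
    next
      case False
      obtain m where m: "m \<in> maxF (G k)" "g \<subseteq>\<^sub>m m"
        using exists_max_above[OF bspec[OF finG kg(1)] kg(2) False] by blast
      have mG: "m \<in> G k" using m(1) maxF_sub by blast
      have dm: "dom m \<inter> E = {}" using bspec[OF bspec[OF dG kg(1)] mG] .
      have "dom m \<inter> dom k = {}" using dm dk by simp
      then have "k ++ g \<subseteq>\<^sub>m k ++ m" using add_mono_right[OF m(2)] by blast
      then have "k ++ m = f" using mx[OF cmp_I2[of k K m G F0, OF kg(1) mG]] kg(3) by blast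
      then show ?thesis using kg(1) m(1) by blast
    qed
  qed
next
  fix f assume "f \<in> {k ++ m |k m. k \<in> K \<and> m \<in> maxF (G k)}"
  then obtain k m where km: "f = k ++ m" "k \<in> K" "m \<in> maxF (G k)" by blast
  have mG: "m \<in> G k" using km(3) maxF_sub by blast
  have dk: "dom k = E" using bspec[OF dK km(2)] .
  have dm: "dom m \<inter> E = {}" using bspec[OF bspec[OF dG km(2)] mG] .
  have mne: "m \<noteq> Map.empty" using maxF_ne[OF km(3)] .
  have fc: "f \<in> cmp F0 K G" using cmp_I2[of k K m G F0, OF km(2) mG] km(1) by simp
  have mf: "m \<subseteq>\<^sub>m f" using km(1) by simp
  have dkm: "dom k \<inter> dom m = {}" using dk dm by (simp add: Int_commute)
  have kf: "k \<subseteq>\<^sub>m f" using le_add_left[OF dkm] km(1) by simp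
  have fne: "f \<noteq> Map.empty"
  proof
    assume "f = Map.empty"
    then have "m = Map.empty" using mf le_empty_map by simp
    then show False using mne by simp
  qed
  show "f \<in> maxF (cmp F0 K G)"
  proof (rule maxF_I[OF fc fne])
    fix f' assume f': "f' \<in> cmp F0 K G" "f \<subseteq>\<^sub>m f'"
    show "f' = f"
    proof (rule cmp_cases[OF f'(1)])
      assume f0: "f' \<in> F0"
      have "dom m \<subseteq> dom f'" using map_le_implies_dom_le[OF map_le_trans[OF mf f'(2)]] .
      moreover have "dom f' \<subseteq> E" using bspec[OF dF0 f0] .
      ultimately have "m = Map.empty" using disj_sub_empty dm by blast
      then show ?thesis using mne by simp
    next
      fix k2 g2 assume kg: "k2 \<in> K" "g2 \<in> G k2" "f' = k2 ++ g2"
      have dk2: "dom k2 = E" using bspec[OF dK kg(1)] .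
      have dg2: "dom g2 \<inter> E = {}" using bspec[OF bspec[OF dG kg(1)] kg(2)] .
      have "dom k2 \<inter> dom g2 = {}" using dk2 dg2 by (simp add: Int_commute)
      then have k2f: "k2 \<subseteq>\<^sub>m f'" using le_add_left kg(3) by simp
      have kf': "k \<subseteq>\<^sub>m f'" using map_le_trans[OF kf f'(2)] .
      have kk: "k2 = k" using le_same_dom[OF k2f kf'] dk dk2 by simp
      have "m \<subseteq>\<^sub>m k ++ g2" using map_le_trans[OF mf f'(2)] kg(3) kk by simp
      moreover have "dom m \<inter> dom k = {}" using dm dk by simp
      ultimately have "m \<subseteq>\<^sub>m g2" by (rule le_add_cancel)
      then have "g2 = m" using maxF_max[OF km(3)] kg(2) kk by blast
      then show ?thesis using kg(3) kk km(1) by simp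
    qed
  qed
qed

lemma fc_cmp:
  assumes fin0: "finite F0" and fc0: "fcF F0" and K: "K = maxF F0"
    and finG: "\<forall>k\<in>K. finite (G k)" and fcG: "\<forall>k\<in>K. fcF (G k)"
    and evG: "\<forall>k\<in>K. events (G k) = E'" and inG: "\<forall>k\<in>K. inputs (G k) = I'"
    and disj: "events F0 \<inter> E' = {}" and neG: "\<forall>k\<in>K. \<exists>g\<in>G k. g \<noteq> Map.empty" and Kne: "K \<noteq> {}"
  shows "fcF (cmp F0 K G)"
proof -
  define E0 where "E0 = events F0"
  define I0 where "I0 = inputs F0"
  have KT: "K = Tot E0 I0" using fc0 K unfolding fcF_def E0_def I0_def by simp
  have KF: "K \<subseteq> F0" using K maxF_sub by simp
  have dF0: "\<forall>a\<in>F0. dom a \<subseteq> E0" unfolding E0_def by (intro ballI dom_events)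
  have dK: "\<forall>k\<in>K. dom k = E0"
  proof
    fix k assume "k \<in> K" then have "k \<in> Tot E0 I0" using KT by simp
    then show "dom k = E0" by (rule Tot_dom)
  qed
  have dG: "\<forall>k\<in>K. \<forall>g\<in>G k. dom g \<inter> E0 = {}"
  proof (intro ballI)
    fix k g assume kg: "k \<in> K" "g \<in> G k"
    have "dom g \<subseteq> events (G k)" using dom_events[OF kg(2)] .
    then have "dom g \<subseteq> E'" using bspec[OF evG kg(1)] by simp
    then show "dom g \<inter> E0 = {}" using disj unfolding E0_def by blast
  qed
  have mG: "\<forall>k\<in>K. maxF (G k) = Tot E' I'"
  proof
    fix k assume k: "k \<in> K"
    show "maxF (G k) = Tot E' I'" using bspec[OF fcG k] bspec[OF evG k] bspec[OF inG k] unfolding fcF_def by simp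
  qed
  obtain k0 where k0: "k0 \<in> K" using Kne by blast
  have o1: "\<forall>\<omega>. \<omega> \<notin> E0 \<longrightarrow> I0 \<omega> = {}" unfolding E0_def I0_def by (intro allI impI inputs_out)
  have o2: "\<forall>\<omega>. \<omega> \<notin> E' \<longrightarrow> I' \<omega> = {}"
    using inputs_out[of _ "G k0"] bspec[OF evG k0] bspec[OF inG k0] by simp
  have d0: "E0 \<inter> E' = {}" using disj unfolding E0_def .
  have "maxF (cmp F0 K G) = {k ++ m |k m. k \<in> K \<and> m \<in> maxF (G k)}"
    using maxF_cmp[OF fin0 finG K dF0 dK dG neG] .
  also have "\<dots> = {k ++ m |k m. k \<in> Tot E0 I0 \<and> m \<in> Tot E' I'}"
  proof (intro set_eqI iffI)
    fix x assume "x \<in> {k ++ m |k m. k \<in> K \<and> m \<in> maxF (G k)}"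
    then obtain k m where "x = k ++ m" "k \<in> K" "m \<in> maxF (G k)" by blast
    then show "x \<in> {k ++ m |k m. k \<in> Tot E0 I0 \<and> m \<in> Tot E' I'}" using KT mG by blast
  next
    fix x assume "x \<in> {k ++ m |k m. k \<in> Tot E0 I0 \<and> m \<in> Tot E' I'}"
    then obtain k m where "x = k ++ m" "k \<in> K" "m \<in> Tot E' I'" using KT by blast
    then show "x \<in> {k ++ m |k m. k \<in> K \<and> m \<in> maxF (G k)}" using mG by blast
  qed
  also have "\<dots> = Tot (E0 \<union> E') (\<lambda>\<omega>. I0 \<omega> \<union> I' \<omega>)" using Tot_prod[OF d0 o1 o2] by simp
  finally have m: "maxF (cmp F0 K G) = Tot (E0 \<union> E') (\<lambda>\<omega>. I0 \<omega> \<union> I' \<omega>)" .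
  have ev: "events (cmp F0 K G) = E0 \<union> E'"
  proof -
    have "(\<Union>k\<in>K. events (G k)) = E'" using evG Kne by auto
    then show ?thesis using events_cmp[OF KF, of G] unfolding E0_def by simp
  qed
  have inp: "inputs (cmp F0 K G) = (\<lambda>\<omega>. I0 \<omega> \<union> I' \<omega>)"
  proof
    fix \<omega>
    have "(\<Union>k\<in>K. inputs (G k) \<omega>) = I' \<omega>" using inG Kne by auto
    then show "inputs (cmp F0 K G) \<omega> = I0 \<omega> \<union> I' \<omega>" using inputs_cmp[OF KF, of G \<omega>] unfolding I0_def by simp
  qed
  show ?thesis unfolding fcF_def m ev inp ..
qed

lemma maxExt_sub_fam: "maxExt A \<subseteq> fam A"
  unfolding maxExt_def using Ext_sub_fam by blast

lemma cseq_space: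
  assumes spA: "space A" and dA: "\<forall>a\<in>A. dom a \<subseteq> E" and dK: "\<forall>k\<in>maxExt A. dom k = E"
    and spB: "\<forall>k\<in>maxExt A. space (B k)" and dB: "\<forall>k\<in>maxExt A. \<forall>b\<in>B k. dom b \<inter> E = {}"
  shows "space (cseq A B)"
proof -
  have eq: "cseq A B = cmp A (maxExt A) B" using cseq_comp[OF dK dB] .
  have finA: "finite A" using spA unfolding space_def by simp
  have finK: "finite (maxExt A)" using finite_subset[OF maxExt_sub_fam finite_fam[OF finA]] .
  have finB: "\<forall>k\<in>maxExt A. finite (B k)" using spB unfolding space_def by blast
  have fin: "finite (cmp A (maxExt A) B)" using finite_comp[OF finA finK finB] .
  have vpA: "\<forall>h\<in>A. \<not> cov (sb A h) h" using spA unfolding space_def vee_prime_iff by blast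
  have vpB: "\<forall>k\<in>maxExt A. \<forall>h\<in>B k. \<not> cov (sb (B k) h) h" using spB unfolding space_def vee_prime_iff by blast
  have neB: "\<forall>k\<in>maxExt A. Map.empty \<notin> B k" using spB space_empty by blast
  have "\<forall>h\<in>cmp A (maxExt A) B. \<not> cov (sb (cmp A (maxExt A) B) h) h"
  proof (intro ballI notI)
    fix h assume h: "h \<in> cmp A (maxExt A) B" and c: "cov (sb (cmp A (maxExt A) B) h) h"
    show False
    proof (rule cmp_cases[OF h])
      assume hA: "h \<in> A"
      have dh: "dom h \<subseteq> E" using bspec[OF dA hA] .
      have "sb (cmp A (maxExt A) B) h \<subseteq> sb A h"
      proof
        fix c assume cs: "c \<in> sb (cmp A (maxExt A) B) h"
        then have c1: "c \<in> cmp A (maxExt A) B" "c \<subseteq>\<^sub>m h" "c \<noteq> h" unfolding sb_def by auto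
        show "c \<in> sb A h"
        proof (rule cmp_cases[OF c1(1)])
          assume "c \<in> A" then show ?thesis using c1(2,3) unfolding sb_def by simp
        next
          fix k b assume kb: "k \<in> maxExt A" "b \<in> B k" "c = k ++ b"
          have "dom b \<subseteq> dom h" using map_le_implies_dom_le[OF map_le_trans[OF le_add_right c1(2)[unfolded kb(3)]]] .
          then have "dom b \<subseteq> E" using dh by blast
          then have "b = Map.empty" using disj_sub_empty bspec[OF bspec[OF dB kb(1)] kb(2)] by blast
          then show ?thesis using bspec[OF neB kb(1)] kb(2) by simp
        qed
      qed
      then have "cov (sb A h) h" using cov_mono[OF c] by blast
      then show False using bspec[OF vpA hA] by simp
    next
      fix k b assume kb: "k \<in> maxExt A" "b \<in> B k" "h = k ++ b"
      have dk: "dom k = E" using bspec[OF dK kb(1)] .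
      have db: "dom b \<inter> E = {}" using bspec[OF bspec[OF dB kb(1)] kb(2)] .
      have dkb: "dom k \<inter> dom b = {}" using dk db by (simp add: Int_commute)
      have kh: "k \<subseteq>\<^sub>m h" using le_add_left[OF dkb] kb(3) by simp
      have "cov (sb (B k) b) b" unfolding cov_def
      proof
        fix y assume yb: "y \<in> dom b"
        then have yE: "y \<notin> E" using db by blast
        have yh: "y \<in> dom h" using yb kb(3) by simp
        obtain c where c1: "c \<in> sb (cmp A (maxExt A) B) h" "c \<subseteq>\<^sub>m h" "y \<in> dom c" using covE[OF c yh] by blast
        have c2: "c \<in> cmp A (maxExt A) B" "c \<noteq> h" using c1(1) unfolding sb_def by auto
        show "\<exists>g\<in>sb (B k) b. g \<subseteq>\<^sub>m b \<and> y \<in> dom g"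
        proof (rule cmp_cases[OF c2(1)])
          assume "c \<in> A"
          then have "dom c \<subseteq> E" using bspec[OF dA] by blast
          then show ?thesis using c1(3) yE by blast
        next
          fix k2 b2 assume kb2: "k2 \<in> maxExt A" "b2 \<in> B k2" "c = k2 ++ b2"
          have dk2: "dom k2 = E" using bspec[OF dK kb2(1)] .
          have db2: "dom b2 \<inter> E = {}" using bspec[OF bspec[OF dB kb2(1)] kb2(2)] .
          have dkb2: "dom k2 \<inter> dom b2 = {}" using dk2 db2 by (simp add: Int_commute)
          have k2h: "k2 \<subseteq>\<^sub>m h" using map_le_trans[OF le_add_left[OF dkb2]] c1(2) kb2(3) by simp
          have kk: "k2 = k" using le_same_dom[OF k2h kh] dk dk2 by simp
          have "b2 \<subseteq>\<^sub>m k ++ b" using map_le_trans[OF le_add_right] c1(2) kb2(3) kb(3) by simp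
          moreover have "dom b2 \<inter> dom k = {}" using db2 dk by simp
          ultimately have b2b: "b2 \<subseteq>\<^sub>m b" by (rule le_add_cancel)
          have "b2 \<noteq> b" using c2(2) kb2(3) kb(3) kk by auto
          then have "b2 \<in> sb (B k) b" unfolding sb_def using kb2(2) kk b2b by simp
          moreover have "y \<in> dom b2" using c1(3) kb2(3) dk2 yE by auto
          ultimately show ?thesis using b2b by blast
        qed
      qed
      then show False using bspec[OF bspec[OF vpB kb(1)] kb(2)] by simp
    qed
  qed
  then have "vee_prime (cmp A (maxExt A) B)" unfolding vee_prime_iff .
  then show ?thesis unfolding eq space_def using fin by simp
qed


lemma ext_Tot: assumes "dom f \<subseteq> E" "\<forall>x\<in>dom f. the (f x) \<in> I x" "\<forall>x\<in>E. I x \<noteq> {}"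
  shows "\<exists>m\<in>Tot E I. f \<subseteq>\<^sub>m m"
proof -
  define m where "m = (\<lambda>x. if x \<in> dom f then f x else if x \<in> E then Some (SOME v. v \<in> I x) else None)"
  have dm: "dom m = E"
  proof
    show "dom m \<subseteq> E"
    proof
      fix x assume x: "x \<in> dom m"
      show "x \<in> E"
      proof (cases "x \<in> dom f")
        case True show ?thesis using subsetD[OF assms(1) True] .
      next
        case False
        then have "m x = (if x \<in> E then Some (SOME v. v \<in> I x) else None)" unfolding m_def by simp
        then show ?thesis using x by (auto split: if_splits)
      qed
    qed
    show "E \<subseteq> dom m"
    proof
      fix x assume x: "x \<in> E"
      show "x \<in> dom m"
      proof (cases "x \<in> dom f")
        case True then have "m x = f x" unfolding m_def by simp
        then show ?thesis using True by (simp add: domIff)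
      next
        case False
        then have "m x = Some (SOME v. v \<in> I x)" using x unfolding m_def by simp
        then show ?thesis by blast
      qed
    qed
  qed
  have "\<forall>x\<in>E. the (m x) \<in> I x"
  proof
    fix x assume x: "x \<in> E"
    show "the (m x) \<in> I x"
    proof (cases "x \<in> dom f")
      case True then show ?thesis using assms(2) unfolding m_def by simp
    next
      case False
      have "\<exists>v. v \<in> I x" using assms(3) x by blast
      then have "(SOME v. v \<in> I x) \<in> I x" by (rule someI_ex)
      then show ?thesis using False x unfolding m_def by simp
    qed
  qed
  then have "m \<in> Tot E I" unfolding Tot_def using dm by blast
  moreover have "f \<subseteq>\<^sub>m m" unfolding map_le_def m_def by simp
  ultimately show ?thesis by blast
qed

lemma cov_mono_F: "cov A f \<Longrightarrow> A \<subseteq> B \<Longrightarrow> cl B \<Longrightarrow> f \<in> B"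
  unfolding cl_def using cov_mono by blast

lemma events_mono: "A \<subseteq> B \<Longrightarrow> events A \<subseteq> events B"
  unfolding events_def by blast

lemma inputs_mono: "A \<subseteq> B \<Longrightarrow> inputs A w \<subseteq> inputs B w"
  unfolding inputs_def by blast

lemma free_choice_Tot: "free_choice X \<Longrightarrow> maxExt X = Tot (events X) (inputs X)"
  unfolding free_choice_def Tot_def by simp

lemma maxExt_ne: assumes "free_choice X" shows "maxExt X \<noteq> {}"
proof -
  have "Tot (events X) (inputs X) \<noteq> {}" by (rule Tot_ne) (intro ballI inputs_ne)
  then show ?thesis using free_choice_Tot[OF assms] by simp
qed

lemma bm_facts:
  assumes sub: "fam X \<subseteq> F" and bm: "below_max X F" and sp: "space X"
  shows "maxF F = maxExt X" "events F = events X" "inputs F = inputs X"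
proof -
  have eX: "Map.empty \<notin> X" using space_empty[OF sp] .
  have mx: "maxExt X = maxF (fam X)" using maxExt_fam[OF eX] .
  have bm': "\<And>f. f \<in> F \<Longrightarrow> \<exists>m\<in>maxExt X. f \<subseteq>\<^sub>m m" using bm unfolding below_max_def by blast
  show "maxF F = maxExt X"
  proof (intro set_eqI iffI)
    fix k assume k: "k \<in> maxF F"
    obtain m where m: "m \<in> maxExt X" "k \<subseteq>\<^sub>m m" using bm'[OF subsetD[OF maxF_sub k]] by blast
    have "m \<in> F" using m(1) mx maxF_sub sub by blast
    then have "m = k" using maxF_max[OF k] m(2) by blast
    then show "k \<in> maxExt X" using m(1) by simp
  next
    fix m assume m: "m \<in> maxExt X"
    have mfam: "m \<in> maxF (fam X)" using m mx by simp
    have mF: "m \<in> F" using mfam maxF_sub sub by blast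
    show "m \<in> maxF F"
    proof (rule maxF_I[OF mF maxF_ne[OF mfam]])
      fix f' assume f': "f' \<in> F" "m \<subseteq>\<^sub>m f'"
      obtain m' where m': "m' \<in> maxExt X" "f' \<subseteq>\<^sub>m m'" using bm'[OF f'(1)] by blast
      have "m' \<in> fam X" using m'(1) mx maxF_sub by blast
      then have "m' = m" using maxF_max[OF mfam] map_le_trans[OF f'(2) m'(2)] by blast
      then show "f' = m" using f'(2) m'(2) map_le_antisym by metis
    qed
  qed
  show "events F = events X"
  proof
    show "events X \<subseteq> events F" using events_mono[OF sub] events_fam by metis
    show "events F \<subseteq> events X"
    proof
      fix x assume "x \<in> events F"
      then obtain f where f: "f \<in> F" "x \<in> dom f" unfolding events_def by blast
      obtain m where m: "m \<in> maxExt X" "f \<subseteq>\<^sub>m m" using bm'[OF f(1)] by blast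
      have "m \<in> fam X" using m(1) mx maxF_sub by blast
      then have "dom m \<subseteq> events X" using cov_dom famD by metis
      then show "x \<in> events X" using le_dom[OF m(2) f(2)] by blast
    qed
  qed
  show "inputs F = inputs X"
  proof (rule ext, rule set_eqI, rule iffI)
    fix w v assume "v \<in> inputs F w"
    then obtain f where f: "f \<in> F" "f w = Some v" unfolding inputs_def by blast
    obtain m where m: "m \<in> maxExt X" "f \<subseteq>\<^sub>m m" using bm'[OF f(1)] by blast
    have "m \<in> fam X" using m(1) mx maxF_sub by blast
    moreover have "m w = Some v" using m(2) f(2) unfolding map_le_def by (metis domI)
    ultimately have "v \<in> inputs (fam X) w" by (rule inputsI)
    then show "v \<in> inputs X w" using inputs_fam by metis
  next
    fix w v assume "v \<in> inputs X w"
    then have "v \<in> inputs (fam X) w" using inputs_fam by metis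
    then show "v \<in> inputs F w" using inputs_mono[OF sub] by blast
  qed
qed

lemma bm_fc: assumes "fam X \<subseteq> F" "below_max X F" "space X" "free_choice X" shows "fcF F"
  unfolding fcF_def bm_facts[OF assms(1-3)] using free_choice_Tot[OF assms(4)] by simp

lemma good_fam_sub: "good X F \<Longrightarrow> fam X \<subseteq> F" unfolding good_def by simp
lemma good_acc: "good X F \<Longrightarrow> acc F" unfolding good_def by simp
lemma good_findom: "good X F \<Longrightarrow> findom F" unfolding good_def by simp
lemma good_fcF: "good X F \<Longrightarrow> fcF F" unfolding good_def by simp
lemma goodI: "finite F \<Longrightarrow> cl F \<Longrightarrow> acc F \<Longrightarrow> findom F \<Longrightarrow> fcF F \<Longrightarrow> fam X \<subseteq> F \<Longrightarrow> good X F"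
  unfolding good_def by simp

lemma filter_good:
  assumes g: "good X F" and sp: "space X" and fc: "free_choice X"
  shows "good X {f\<in>F. \<exists>m\<in>maxExt X. f \<subseteq>\<^sub>m m}" (is "good X ?F")
proof -
  have eX: "Map.empty \<notin> X" using space_empty[OF sp] .
  have mx: "maxExt X = maxF (fam X)" using maxExt_fam[OF eX] .
  have finX: "finite (fam X)" using sp finite_fam unfolding space_def by blast
  have T: "maxExt X = Tot (events X) (inputs X)" using free_choice_Tot[OF fc] .
  have sub: "?F \<subseteq> F" by blast
  have fin: "finite ?F" using finite_subset[OF sub good_finite[OF g]] .
  have cl: "cl ?F" unfolding cl_def
  proof (intro allI impI)
    fix f assume c: "cov ?F f"
    have fF: "f \<in> F" using cov_mono_F[OF c sub good_cl[OF g]] .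
    have h: "\<forall>x\<in>dom f. x \<in> events X \<and> the (f x) \<in> inputs X x"
    proof
      fix x assume x: "x \<in> dom f"
      obtain g where gg: "g \<in> ?F" "g \<subseteq>\<^sub>m f" "x \<in> dom g" using covE[OF c x] by blast
      obtain m where m: "m \<in> maxExt X" "g \<subseteq>\<^sub>m m" using gg(1) by blast
      have mT: "m \<in> Tot (events X) (inputs X)" using m(1) T by simp
      have xm: "x \<in> dom m" using le_dom[OF m(2) gg(3)] .
      have "f x = g x" using gg(2,3) unfolding map_le_def by simp
      moreover have "g x = m x" using m(2) gg(3) unfolding map_le_def by simp
      ultimately have "f x = m x" by simp
      moreover have "x \<in> events X" using xm Tot_dom[OF mT] by simp
      moreover have "the (m x) \<in> inputs X x" using mT \<open>x \<in> events X\<close> unfolding Tot_def by blast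
      ultimately show "x \<in> events X \<and> the (f x) \<in> inputs X x" by simp
    qed
    have h1: "dom f \<subseteq> events X" using h by blast
    have h2: "\<forall>x\<in>dom f. the (f x) \<in> inputs X x" using h by blast
    have h3: "\<forall>x\<in>events X. inputs X x \<noteq> {}" by (intro ballI inputs_ne)
    have "\<exists>m\<in>Tot (events X) (inputs X). f \<subseteq>\<^sub>m m" using ext_Tot[OF h1 h2 h3] .
    then show "f \<in> ?F" using fF T by simp
  qed
  have acc: "acc ?F" unfolding acc_def
  proof (intro ballI impI)
    fix f assume f: "f \<in> ?F" "f \<noteq> Map.empty"
    then obtain x where x: "x \<in> dom f" "f(x:=None) \<in> F" using good_acc[OF g] unfolding acc_def by blast
    obtain m where m: "m \<in> maxExt X" "f \<subseteq>\<^sub>m m" using f(1) by blast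
    have "f(x:=None) \<subseteq>\<^sub>m f" unfolding map_le_def by simp
    then have "f(x:=None) \<subseteq>\<^sub>m m" using map_le_trans m(2) by blast
    then show "\<exists>x\<in>dom f. f(x:=None) \<in> ?F" using x m(1) by blast
  qed
  have fd: "findom ?F" using good_findom[OF g] unfolding findom_def by blast
  have famsub: "fam X \<subseteq> ?F"
  proof
    fix f assume f: "f \<in> fam X"
    have fF: "f \<in> F" using f good_fam_sub[OF g] by blast
    show "f \<in> ?F"
    proof (cases "f = Map.empty")
      case True
      obtain m where "m \<in> maxExt X" using maxExt_ne[OF fc] by blast
      then show ?thesis using fF True map_le_empty by blast
    next
      case False
      obtain m where "m \<in> maxF (fam X)" "f \<subseteq>\<^sub>m m" using exists_max_above[OF finX f False] by blast
      then show ?thesis using fF mx by blast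
    qed
  qed
  have bm: "below_max X ?F" unfolding below_max_def by blast
  have fcf: "fcF ?F" using bm_fc[OF famsub bm sp fc] .
  show ?thesis using goodI[OF fin cl acc fd fcf famsub] .
qed

lemma mingood_bm: assumes "mingood X F" "space X" "free_choice X" shows "below_max X F"
proof -
  have g: "good X F" using assms(1) unfolding mingood_def by simp
  have "F = {f\<in>F. \<exists>m\<in>maxExt X. f \<subseteq>\<^sub>m m}"
    using assms(1) filter_good[OF g assms(2,3)] unfolding mingood_def by blast
  then show ?thesis unfolding below_max_def by blast
qed

lemma descend:
  assumes acc: "acc F" and fd: "findom F"
  shows "f1 \<in> F \<Longrightarrow> dom f1 - E \<noteq> {} \<Longrightarrow> \<exists>x\<in>dom f1 - E. \<exists>f2\<in>F. f2 \<subseteq>\<^sub>m f1 \<and> dom f2 - E = dom f1 - E - {x}"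
proof (induct f1 rule: measure_induct_rule[of "\<lambda>f. card (dom f)"])
  case (less f1)
  have ne: "f1 \<noteq> Map.empty" using less.prems(2) by auto
  obtain y where y: "y \<in> dom f1" "f1(y:=None) \<in> F" using acc less.prems(1) ne unfolding acc_def by blast
  have le: "f1(y:=None) \<subseteq>\<^sub>m f1" unfolding map_le_def by simp
  show ?case
  proof (cases "y \<in> E")
    case False
    have "dom (f1(y:=None)) - E = dom f1 - E - {y}" by auto
    then show ?thesis using y le False by blast
  next
    case True
    have d: "dom (f1(y:=None)) - E = dom f1 - E" using True by auto
    have "finite (dom f1)" using fd less.prems(1) unfolding findom_def by blast
    then have "card (dom (f1(y:=None))) < card (dom f1)" using y(1) card_Diff1_less[of "dom f1" y] by simp
    then obtain x f2 where "x \<in> dom (f1(y:=None)) - E" "f2 \<in> F" "f2 \<subseteq>\<^sub>m f1(y:=None)"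
        "dom f2 - E = dom (f1(y:=None)) - E - {x}"
      using less.hyps[OF _ y(2)] less.prems(2) d by metis
    then show ?thesis using d map_le_trans[OF _ le] by metis
  qed
qed

lemma le_add_cancel_left: assumes "f \<subseteq>\<^sub>m k ++ m" "dom f \<subseteq> dom k" "dom m \<inter> dom k = {}" shows "f \<subseteq>\<^sub>m k"
  unfolding map_le_def
proof
  fix a assume a: "a \<in> dom f"
  then have e: "f a = (k ++ m) a" using assms(1) unfolding map_le_def by blast
  have "a \<in> dom k" using a assms(2) by blast
  then have "m a = None" using assms(3) by (auto simp: domIff)
  then show "f a = k a" using e by (simp add: map_add_def)
qed

lemma cmp_cong: "(\<And>k. k \<in> K \<Longrightarrow> G k = G' k) \<Longrightarrow> cmp F0 K G = cmp F0 K G'"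
  unfolding cmp_def by force


locale setting =
  fixes \<Theta> :: "('e \<rightharpoonup> 'v) set" and \<Theta>' :: "('e \<rightharpoonup> 'v) \<Rightarrow> ('e \<rightharpoonup> 'v) set"
  assumes spT: "space \<Theta>" and fcT: "free_choice \<Theta>"
    and spT': "\<And>k. k \<in> maxExt \<Theta> \<Longrightarrow> space (\<Theta>' k)"
    and fcT': "\<And>k. k \<in> maxExt \<Theta> \<Longrightarrow> free_choice (\<Theta>' k)"
    and disjT: "\<And>k. k \<in> maxExt \<Theta> \<Longrightarrow> events \<Theta> \<inter> events (\<Theta>' k) = {}"
    and sameT: "\<And>k1 k2. k1 \<in> maxExt \<Theta> \<Longrightarrow> k2 \<in> maxExt \<Theta> \<Longrightarrow>
           events (\<Theta>' k1) = events (\<Theta>' k2) \<and>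
           (\<forall>\<omega>\<in>events (\<Theta>' k1). inputs (\<Theta>' k1) \<omega> = inputs (\<Theta>' k2) \<omega>)"
begin

definition "E = events \<Theta>"
definition "M = maxExt \<Theta>"
definition "C = cseq \<Theta> \<Theta>'"
definition "k0 = (SOME k. k \<in> M)"
definition "E' = events (\<Theta>' k0)"
definition "I' = inputs (\<Theta>' k0)"

lemma eT: "Map.empty \<notin> \<Theta>" using space_empty[OF spT] .

lemma M_ne: "M \<noteq> {}" unfolding M_def using maxExt_ne[OF fcT] .

lemma k0M: "k0 \<in> M" unfolding k0_def using M_ne by (metis ex_in_conv someI_ex)

lemma M_Tot: "M = Tot E (inputs \<Theta>)" unfolding M_def E_def using free_choice_Tot[OF fcT] .

lemma dM: "k \<in> M \<Longrightarrow> dom k = E" using M_Tot Tot_dom by metis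

lemma evT': assumes "k \<in> M" shows "events (\<Theta>' k) = E'"
  using sameT[of k0 k] k0M assms unfolding M_def E'_def by simp

lemma inT': assumes k: "k \<in> M" shows "inputs (\<Theta>' k) = I'"
proof
  fix w show "inputs (\<Theta>' k) w = I' w"
  proof (cases "w \<in> E'")
    case True
    then show ?thesis using sameT[of k0 k] k0M k unfolding M_def E'_def I'_def by simp
  next
    case False
    then have "w \<notin> events (\<Theta>' k)" using evT'[OF k] by simp
    then have "inputs (\<Theta>' k) w = {}" by (rule inputs_out)
    moreover have "I' w = {}" unfolding I'_def using False unfolding E'_def by (rule inputs_out)
    ultimately show ?thesis by simp
  qed
qed

lemma spT'M: "k \<in> M \<Longrightarrow> space (\<Theta>' k)" using spT' unfolding M_def .
lemma fcT'M: "k \<in> M \<Longrightarrow> free_choice (\<Theta>' k)" using fcT' unfolding M_def .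

lemma disjEE': "E \<inter> E' = {}" using disjT[of k0] k0M unfolding M_def E_def E'_def by simp

lemma dT: "a \<in> \<Theta> \<Longrightarrow> dom a \<subseteq> E" unfolding E_def by (rule dom_events)

lemma dT': assumes "k \<in> M" "b \<in> \<Theta>' k" shows "dom b \<inter> E = {}"
proof -
  have "dom b \<subseteq> E'" using dom_events[OF assms(2)] evT'[OF assms(1)] by simp
  then show ?thesis using disjEE' by blast
qed

lemma M_fam: "M \<subseteq> fam \<Theta>" unfolding M_def by (rule maxExt_sub_fam)

lemma maxF_T: "maxF (fam \<Theta>) = M" unfolding M_def using maxExt_fam[OF eT] by simp

lemma maxExt_T': "k \<in> M \<Longrightarrow> maxExt (\<Theta>' k) = Tot E' I'"
  using free_choice_Tot[OF fcT'M] evT' inT' by metis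

lemma dMa: "\<forall>k\<in>M. dom k = E" by (intro ballI) (rule dM)
lemma dT'a: "\<forall>k\<in>M. \<forall>b\<in>\<Theta>' k. dom b \<inter> E = {}" by (intro ballI) (rule dT')
lemma dTa: "\<forall>a\<in>\<Theta>. dom a \<subseteq> E" by (intro ballI) (rule dT)

lemma C_cmp: "C = cmp \<Theta> M \<Theta>'"
  unfolding C_def using cseq_comp[OF dMa[unfolded M_def] dT'a[unfolded M_def]] unfolding M_def .

lemma famC: "fam C = cmp (fam \<Theta>) M (\<lambda>k. fam (\<Theta>' k))"
  unfolding C_cmp by (rule fam_comp[OF dTa dMa dT'a M_fam])

lemma spC: "space C"
proof -
  have "\<forall>k\<in>M. space (\<Theta>' k)" by (intro ballI) (rule spT'M)
  then show ?thesis unfolding C_def using cseq_space[OF spT dTa dMa[unfolded M_def] _ dT'a[unfolded M_def]] unfolding M_def by blast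
qed

lemma eC: "Map.empty \<notin> C" using space_empty[OF spC] .

lemma T_sub_C: "\<Theta> \<subseteq> C" unfolding C_cmp cmp_def by blast

lemma famT_famC: "fam \<Theta> \<subseteq> fam C" using fam_mono[OF T_sub_C] .

lemma Tot'_ne: "Tot E' I' \<noteq> {}"
proof -
  have "maxExt (\<Theta>' k0) \<noteq> {}" using maxExt_ne[OF fcT'M[OF k0M]] .
  then show ?thesis using maxExt_T'[OF k0M] by simp
qed

lemma neG_gen: assumes "\<forall>k\<in>M. maxF (G k) = Tot E' I'" shows "\<forall>k\<in>M. \<exists>g\<in>G k. g \<noteq> Map.empty"
proof
  fix k assume k: "k \<in> M"
  obtain m where "m \<in> Tot E' I'" using Tot'_ne by blast
  then have "m \<in> maxF (G k)" using bspec[OF assms k] by simp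
  then show "\<exists>g\<in>G k. g \<noteq> Map.empty" using maxF_sub maxF_ne by blast
qed

lemma fcC: "free_choice C"
proof -
  have f: "fcF (cmp (fam \<Theta>) M (\<lambda>k. fam (\<Theta>' k)))"
  proof (rule fc_cmp)
    show "finite (fam \<Theta>)" using spT finite_fam unfolding space_def by blast
    show "fcF (fam \<Theta>)" using fc_fam[OF eT] fcT by simp
    show "M = maxF (fam \<Theta>)" using maxF_T by simp
    show "\<forall>k\<in>M. finite (fam (\<Theta>' k))" using spT'M finite_fam unfolding space_def by blast
    show "\<forall>k\<in>M. fcF (fam (\<Theta>' k))" using fc_fam space_empty spT'M fcT'M by blast
    show "\<forall>k\<in>M. events (fam (\<Theta>' k)) = E'" using evT' events_fam by metis
    show "\<forall>k\<in>M. inputs (fam (\<Theta>' k)) = I'" using inT' inputs_fam by metis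
    show "events (fam \<Theta>) \<inter> E' = {}" using disjEE' events_fam unfolding E_def by metis
    have "\<forall>k\<in>M. maxF (fam (\<Theta>' k)) = Tot E' I'"
      using maxExt_T' maxExt_fam space_empty spT'M by metis
    then show "\<forall>k\<in>M. \<exists>g\<in>fam (\<Theta>' k). g \<noteq> Map.empty" by (rule neG_gen)
    show "M \<noteq> {}" using M_ne .
  qed
  then show ?thesis using fc_fam[OF eC] famC by simp
qed

lemma maxF_T': assumes "k \<in> M" shows "maxF (fam (\<Theta>' k)) = Tot E' I'"
proof -
  have "Map.empty \<notin> \<Theta>' k" using space_empty[OF spT'M[OF assms]] .
  then show ?thesis using maxExt_fam maxExt_T'[OF assms] by metis
qed

lemma maxExtC: "maxExt C = {k ++ m | k m. k \<in> M \<and> m \<in> Tot E' I'}"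
proof -
  have "maxExt C = maxF (fam C)" using maxExt_fam[OF eC] .
  also have "\<dots> = {k ++ m | k m. k \<in> M \<and> m \<in> maxF (fam (\<Theta>' k))}"
    unfolding famC
  proof (rule maxF_cmp)
    show "finite (fam \<Theta>)" using spT finite_fam unfolding space_def by blast
    show "\<forall>k\<in>M. finite (fam (\<Theta>' k))" using spT'M finite_fam unfolding space_def by blast
    show "M = maxF (fam \<Theta>)" using maxF_T by simp
    show "\<forall>a\<in>fam \<Theta>. dom a \<subseteq> E" unfolding E_def using cov_dom famD by metis
    show "\<forall>k\<in>M. dom k = E" using dM by blast
    show "\<forall>k\<in>M. \<forall>g\<in>fam (\<Theta>' k). dom g \<inter> E = {}"
      using dom_cov_disj famD dT' by metis
    have "\<forall>k\<in>M. maxF (fam (\<Theta>' k)) = Tot E' I'"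
      using maxExt_T' maxExt_fam space_empty spT'M by metis
    then show "\<forall>k\<in>M. \<exists>g\<in>fam (\<Theta>' k). g \<noteq> Map.empty" by (rule neG_gen)
  qed
  also have "\<dots> = {k ++ m | k m. k \<in> M \<and> m \<in> Tot E' I'}"
  proof (intro set_eqI iffI)
    fix x assume "x \<in> {k ++ m | k m. k \<in> M \<and> m \<in> maxF (fam (\<Theta>' k))}"
    then obtain k m where "x = k ++ m" "k \<in> M" "m \<in> maxF (fam (\<Theta>' k))" by blast
    then show "x \<in> {k ++ m | k m. k \<in> M \<and> m \<in> Tot E' I'}" using maxF_T' by blast
  next
    fix x assume "x \<in> {k ++ m | k m. k \<in> M \<and> m \<in> Tot E' I'}"
    then obtain k m where "x = k ++ m" "k \<in> M" "m \<in> Tot E' I'" by blast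
    then show "x \<in> {k ++ m | k m. k \<in> M \<and> m \<in> maxF (fam (\<Theta>' k))}" using maxF_T' by blast
  qed
  finally show ?thesis .
qed

end

context setting
begin

definition "Fs F = {f\<in>F. dom f \<subseteq> E \<or> (\<exists>k\<in>M. k \<subseteq>\<^sub>m f)}"
definition "F0 F = {f\<in>F. dom f \<subseteq> E}"
definition "Gk F k = {g. dom g \<inter> E = {} \<and> k ++ g \<in> F}"
definition "str F \<longleftrightarrow> (\<forall>f\<in>F. dom f \<subseteq> E \<or> (\<exists>k\<in>M. k \<subseteq>\<^sub>m f))"

lemma M_F: assumes "good C F" shows "M \<subseteq> F"
  using M_fam famT_famC good_fam_sub[OF assms] by blast

lemma dom_disj_k: "k \<in> M \<Longrightarrow> dom g \<inter> E = {} \<Longrightarrow> dom k \<inter> dom g = {}"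
  using dM by (simp add: Int_commute)

lemma struct_good: assumes g: "good C F" and bm: "below_max C F" shows "good C (Fs F)"
proof -
  have sub: "Fs F \<subseteq> F" unfolding Fs_def by blast
  have fin: "finite (Fs F)" using finite_subset[OF sub good_finite[OF g]] .
  have fd: "findom (Fs F)" using good_findom[OF g] sub unfolding findom_def by blast
  have MF: "M \<subseteq> F" using M_F[OF g] .
  have cl: "cl (Fs F)" unfolding cl_def
  proof (intro allI impI)
    fix f assume c: "cov (Fs F) f"
    have fF: "f \<in> F" using cov_mono_F[OF c sub good_cl[OF g]] .
    show "f \<in> Fs F"
    proof (cases "\<exists>g\<in>Fs F. g \<subseteq>\<^sub>m f \<and> (\<exists>k\<in>M. k \<subseteq>\<^sub>m g)")
      case True
      then obtain g k where "g \<subseteq>\<^sub>m f" "k \<in> M" "k \<subseteq>\<^sub>m g" by blast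
      then have "k \<subseteq>\<^sub>m f" "k \<in> M" using map_le_trans by blast+
      then show ?thesis unfolding Fs_def using fF by blast
    next
      case False
      have "dom f \<subseteq> E"
      proof
        fix x assume x: "x \<in> dom f"
        obtain g where gg: "g \<in> Fs F" "g \<subseteq>\<^sub>m f" "x \<in> dom g" using covE[OF c x] by blast
        have "\<not> (\<exists>k\<in>M. k \<subseteq>\<^sub>m g)" using False gg(1,2) by blast
        then have "dom g \<subseteq> E" using gg(1) unfolding Fs_def by blast
        then show "x \<in> E" using gg(3) by blast
      qed
      then show ?thesis unfolding Fs_def using fF by blast
    qed
  qed
  have acc: "acc (Fs F)" unfolding acc_def
  proof (intro ballI impI)
    fix f assume f: "f \<in> Fs F" "f \<noteq> Map.empty"
    have fF: "f \<in> F" using f(1) sub by blast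
    show "\<exists>x\<in>dom f. f(x:=None) \<in> Fs F"
    proof (cases "dom f \<subseteq> E")
      case True
      obtain x where x: "x \<in> dom f" "f(x:=None) \<in> F" using good_acc[OF g] fF f(2) unfolding acc_def by blast
      have "dom (f(x:=None)) \<subseteq> E" using True by auto
      then show ?thesis using x unfolding Fs_def by blast
    next
      case False
      then obtain k where k: "k \<in> M" "k \<subseteq>\<^sub>m f" using f(1) unfolding Fs_def by blast
      have dk: "dom k = E" using dM[OF k(1)] .
      have ne: "dom f - E \<noteq> {}" using False by blast
      have ex: "\<exists>x\<in>dom f - E. \<exists>f2\<in>F. f2 \<subseteq>\<^sub>m f \<and> dom f2 - E = dom f - E - {x}"
        using descend[where E=E, OF good_acc[OF g] good_findom[OF g] fF ne] .
      then obtain x f2 where x: "x \<in> dom f - E" and f2: "f2 \<in> F" "f2 \<subseteq>\<^sub>m f" "dom f2 - E = dom f - E - {x}"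
        by blast
      have xE: "x \<notin> E" using x by blast
      have xf2: "x \<notin> dom f2"
      proof
        assume "x \<in> dom f2"
        then have "x \<in> dom f2 - E" using xE by blast
        then show False using f2(3) by blast
      qed
      have kle: "k \<subseteq>\<^sub>m f(x:=None)" unfolding map_le_def
      proof
        fix a assume a: "a \<in> dom k"
        then have "a \<noteq> x" using dk xE by blast
        then show "k a = (f(x:=None)) a" using k(2) a unfolding map_le_def by simp
      qed
      have f2le: "f2 \<subseteq>\<^sub>m f(x:=None)" unfolding map_le_def
      proof
        fix a assume a: "a \<in> dom f2"
        then have "a \<noteq> x" using xf2 by blast
        then show "f2 a = (f(x:=None)) a" using f2(2) a unfolding map_le_def by simp
      qed
      have "cov F (f(x:=None))" unfolding cov_def
      proof
        fix y assume y: "y \<in> dom (f(x:=None))"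
        then have yf: "y \<in> dom f" "y \<noteq> x" by auto
        show "\<exists>h\<in>F. h \<subseteq>\<^sub>m f(x:=None) \<and> y \<in> dom h"
        proof (cases "y \<in> E")
          case True
          then have "y \<in> dom k" using dk by simp
          then show ?thesis using kle subsetD[OF MF k(1)] by blast
        next
          case False
          then have "y \<in> dom f - E - {x}" using yf by blast
          then have "y \<in> dom f2" using f2(3) by blast
          then show ?thesis using f2le f2(1) by blast
        qed
      qed
      then have "f(x:=None) \<in> F" using good_cl[OF g] unfolding cl_def by blast
      then have "f(x:=None) \<in> Fs F" unfolding Fs_def using kle k(1) by blast
      moreover have "x \<in> dom f" using x by blast
      ultimately show ?thesis by blast
    qed
  qed
  have famsub: "fam C \<subseteq> Fs F"
  proof
    fix f assume f: "f \<in> fam C"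
    have fF: "f \<in> F" using f good_fam_sub[OF g] by blast
    have "f \<in> cmp (fam \<Theta>) M (\<lambda>k. fam (\<Theta>' k))" using f famC by simp
    then show "f \<in> Fs F"
    proof (rule cmp_cases)
      assume "f \<in> fam \<Theta>"
      then have "dom f \<subseteq> E" unfolding E_def using cov_dom famD by blast
      then show ?thesis unfolding Fs_def using fF by blast
    next
      fix k g assume kg: "k \<in> M" "g \<in> fam (\<Theta>' k)" "f = k ++ g"
      have "dom g \<inter> E = {}" using dom_cov_disj[OF famD[OF kg(2)]] bspec[OF dT'a kg(1)] by blast
      then have "k \<subseteq>\<^sub>m f" using le_add_left[OF dom_disj_k[OF kg(1)]] kg(3) by simp
      then show ?thesis unfolding Fs_def using fF kg(1) by blast
    qed
  qed
  have bm2: "below_max C (Fs F)" using bm sub unfolding below_max_def by blast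
  have fcf: "fcF (Fs F)" using bm_fc[OF famsub bm2 spC fcC] .
  show ?thesis using goodI[OF fin cl acc fd fcf famsub] .
qed

lemma str_Fs: "str (Fs F)" unfolding str_def Fs_def by blast

lemma F0_good: assumes g: "good C F" and bm: "below_max C F"
  shows "good \<Theta> (F0 F)" "below_max \<Theta> (F0 F)"
proof -
  have sub: "F0 F \<subseteq> F" unfolding F0_def by blast
  have fin: "finite (F0 F)" using finite_subset[OF sub good_finite[OF g]] .
  have fd: "findom (F0 F)" using good_findom[OF g] sub unfolding findom_def by blast
  have cl: "cl (F0 F)" unfolding cl_def
  proof (intro allI impI)
    fix f assume c: "cov (F0 F) f"
    have fF: "f \<in> F" using cov_mono_F[OF c sub good_cl[OF g]] .
    have "dom f \<subseteq> E"
    proof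
      fix x assume x: "x \<in> dom f"
      obtain h where "h \<in> F0 F" "h \<subseteq>\<^sub>m f" "x \<in> dom h" using covE[OF c x] by blast
      then show "x \<in> E" unfolding F0_def by blast
    qed
    then show "f \<in> F0 F" unfolding F0_def using fF by blast
  qed
  have acc: "acc (F0 F)" unfolding acc_def
  proof (intro ballI impI)
    fix f assume f: "f \<in> F0 F" "f \<noteq> Map.empty"
    then obtain x where x: "x \<in> dom f" "f(x:=None) \<in> F" using good_acc[OF g] sub unfolding acc_def by blast
    have "dom (f(x:=None)) \<subseteq> E" using f(1) unfolding F0_def by auto
    then show "\<exists>x\<in>dom f. f(x:=None) \<in> F0 F" using x unfolding F0_def by blast
  qed
  have famsub: "fam \<Theta> \<subseteq> F0 F"
  proof
    fix f assume f: "f \<in> fam \<Theta>"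
    then have "f \<in> F" using famT_famC good_fam_sub[OF g] by blast
    moreover have "dom f \<subseteq> E" using f unfolding E_def using cov_dom famD by blast
    ultimately show "f \<in> F0 F" unfolding F0_def by blast
  qed
  show bm0: "below_max \<Theta> (F0 F)" unfolding below_max_def
  proof
    fix f assume f: "f \<in> F0 F"
    then have fF: "f \<in> F" and df: "dom f \<subseteq> E" unfolding F0_def by auto
    obtain m where m: "m \<in> maxExt C" "f \<subseteq>\<^sub>m m" using bm fF unfolding below_max_def by blast
    obtain k m' where km: "m = k ++ m'" "k \<in> M" "m' \<in> Tot E' I'" using m(1) maxExtC by blast
    have "dom m' \<inter> dom k = {}" using Tot_dom[OF km(3)] dM[OF km(2)] disjEE' by blast
    then have "f \<subseteq>\<^sub>m k" using le_add_cancel_left[of f k m'] m(2) km(1) df dM[OF km(2)] by simp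
    then show "\<exists>m\<in>maxExt \<Theta>. f \<subseteq>\<^sub>m m" using km(2) unfolding M_def by blast
  qed
  have fcf: "fcF (F0 F)" using bm_fc[OF famsub bm0 spT fcT] .
  show "good \<Theta> (F0 F)" using goodI[OF fin cl acc fd fcf famsub] .
qed

lemma Gk_good: assumes g: "good C F" and bm: "below_max C F" and st: "str F" and k: "k \<in> M"
  shows "good (\<Theta>' k) (Gk F k)" "below_max (\<Theta>' k) (Gk F k)"
proof -
  have dk: "dom k = E" using dM[OF k] .
  have MF: "M \<subseteq> F" using M_F[OF g] .
  have kF: "k \<in> F" using MF k by blast
  have GD: "\<And>g. g \<in> Gk F k \<Longrightarrow> dom g \<inter> E = {} \<and> k ++ g \<in> F" unfolding Gk_def by blast
  have GI: "\<And>g. dom g \<inter> E = {} \<Longrightarrow> k ++ g \<in> F \<Longrightarrow> g \<in> Gk F k" unfolding Gk_def by blast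
  have "Gk F k \<subseteq> (\<lambda>f. f |` (-E)) ` F"
  proof
    fix g assume "g \<in> Gk F k"
    then have "dom g \<inter> E = {}" "k ++ g \<in> F" using GD by auto
    then show "g \<in> (\<lambda>f. f |` (-E)) ` F" using restrict_add[OF _ dk] by (metis image_eqI)
  qed
  then have fin: "finite (Gk F k)" using finite_subset good_finite[OF g] by blast
  have fd: "findom (Gk F k)" unfolding findom_def
  proof
    fix g assume "g \<in> Gk F k"
    then have "k ++ g \<in> F" using GD by blast
    then have "finite (dom (k ++ g))" using good_findom[OF g] unfolding findom_def by blast
    then show "finite (dom g)" by simp
  qed
  have cl: "cl (Gk F k)" unfolding cl_def
  proof (intro allI impI)
    fix g assume c: "cov (Gk F k) g"
    have dg: "dom g \<inter> E = {}" using dom_cov_disj[OF c] GD by blast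
    have dkg: "dom k \<inter> dom g = {}" using dom_disj_k[OF k dg] .
    have "cov F (k ++ g)" unfolding cov_def
    proof
      fix y assume y: "y \<in> dom (k ++ g)"
      show "\<exists>h\<in>F. h \<subseteq>\<^sub>m k ++ g \<and> y \<in> dom h"
      proof (cases "y \<in> dom g")
        case True
        obtain g2 where g2: "g2 \<in> Gk F k" "g2 \<subseteq>\<^sub>m g" "y \<in> dom g2" using covE[OF c True] by blast
        have "k ++ g2 \<in> F" using GD[OF g2(1)] by blast
        moreover have "k ++ g2 \<subseteq>\<^sub>m k ++ g" using add_mono_right[OF g2(2)] dkg by blast
        moreover have "y \<in> dom (k ++ g2)" using g2(3) by simp
        ultimately show ?thesis by (intro bexI[of _ "k ++ g2"] conjI)
      next
        case False
        then have "y \<in> dom k" using y by simp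
        moreover have "k \<subseteq>\<^sub>m k ++ g" using le_add_left[OF dkg] .
        ultimately show ?thesis using kF by (intro bexI[of _ k] conjI)
      qed
    qed
    then have "k ++ g \<in> F" using good_cl[OF g] unfolding cl_def by blast
    then show "g \<in> Gk F k" using GI dg by blast
  qed
  have acc: "acc (Gk F k)" unfolding acc_def
  proof (intro ballI impI)
    fix g assume gG: "g \<in> Gk F k" and gne: "g \<noteq> Map.empty"
    have dg: "dom g \<inter> E = {}" and fF: "k ++ g \<in> F" using GD[OF gG] by auto
    have kne: "k ++ g \<noteq> Map.empty" using gne by simp
    have ex: "\<exists>x\<in>dom (k ++ g). (k ++ g)(x:=None) \<in> F" using mp[OF bspec[OF good_acc[OF g, unfolded acc_def] fF] kne] .
    then obtain x where x: "x \<in> dom (k ++ g)" "(k ++ g)(x:=None) \<in> F" by (rule bexE)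
    have xE: "x \<notin> E"
    proof
      assume xE: "x \<in> E"
      obtain y where y: "y \<in> dom g" using gne by fastforce
      have yE: "y \<notin> E" using y dg by blast
      have yx: "y \<noteq> x" using xE yE by blast
      have ydom: "y \<in> dom ((k ++ g)(x:=None))" using y yx by simp
      from st x(2) have "dom ((k ++ g)(x:=None)) \<subseteq> E \<or> (\<exists>k2\<in>M. k2 \<subseteq>\<^sub>m (k ++ g)(x:=None))"
        unfolding str_def by blast
      then show False
      proof
        assume "dom ((k ++ g)(x:=None)) \<subseteq> E"
        then show False using ydom yE by blast
      next
        assume "\<exists>k2\<in>M. k2 \<subseteq>\<^sub>m (k ++ g)(x:=None)"
        then obtain k2 where k2: "k2 \<in> M" "k2 \<subseteq>\<^sub>m (k ++ g)(x:=None)" by blast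
        have "x \<in> dom k2" using dM[OF k2(1)] xE by simp
        then have "x \<in> dom ((k ++ g)(x:=None))" using le_dom[OF k2(2)] by blast
        then show False by simp
      qed
    qed
    have xk: "x \<notin> dom k" using xE dk by simp
    have xg: "x \<in> dom g" using x(1) xk by simp
    have eq: "(k ++ g)(x:=None) = k ++ g(x:=None)" using upd_add[OF xk] .
    have "dom (g(x:=None)) \<inter> E = {}" using dg by auto
    then have "g(x:=None) \<in> Gk F k" using GI x(2) eq by simp
    then show "\<exists>x\<in>dom g. g(x:=None) \<in> Gk F k" using xg by blast
  qed
  have famsub: "fam (\<Theta>' k) \<subseteq> Gk F k"
  proof
    fix g assume gf: "g \<in> fam (\<Theta>' k)"
    have dg: "dom g \<inter> E = {}" using dom_cov_disj[OF famD[OF gf]] bspec[OF dT'a k] by blast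
    have "k ++ g \<in> fam C" using famC cmp_I2[of k M g "\<lambda>k. fam (\<Theta>' k)" "fam \<Theta>", OF k gf] by simp
    then have "k ++ g \<in> F" using good_fam_sub[OF g] by blast
    then show "g \<in> Gk F k" using GI dg by blast
  qed
  show bmG: "below_max (\<Theta>' k) (Gk F k)" unfolding below_max_def
  proof
    fix g assume gG: "g \<in> Gk F k"
    have dg: "dom g \<inter> E = {}" and fF: "k ++ g \<in> F" using GD[OF gG] by auto
    have dkg: "dom k \<inter> dom g = {}" using dom_disj_k[OF k dg] .
    obtain m where m: "m \<in> maxExt C" "k ++ g \<subseteq>\<^sub>m m" using bm fF unfolding below_max_def by blast
    obtain k2 m' where km: "m = k2 ++ m'" "k2 \<in> M" "m' \<in> Tot E' I'" using m(1) maxExtC by blast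
    have dk2m: "dom k2 \<inter> dom m' = {}" using Tot_dom[OF km(3)] dM[OF km(2)] disjEE' by blast
    have k2m: "k2 \<subseteq>\<^sub>m m" using le_add_left[OF dk2m] km(1) by simp
    have km2: "k \<subseteq>\<^sub>m m" using map_le_trans[OF le_add_left[OF dkg] m(2)] .
    have kk: "k2 = k" using le_same_dom[OF k2m km2] dM[OF km(2)] dk by simp
    have "g \<subseteq>\<^sub>m k ++ m'" using map_le_trans[OF le_add_right m(2)] km(1) kk by simp
    moreover have "dom g \<inter> dom k = {}" using dkg by blast
    ultimately have "g \<subseteq>\<^sub>m m'" by (rule le_add_cancel)
    moreover have "m' \<in> maxExt (\<Theta>' k)" using km(3) maxExt_T'[OF k] by simp
    ultimately show "\<exists>m\<in>maxExt (\<Theta>' k). g \<subseteq>\<^sub>m m" by blast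
  qed
  have fcf: "fcF (Gk F k)" using bm_fc[OF famsub bmG spT'M[OF k] fcT'M[OF k]] .
  show "good (\<Theta>' k) (Gk F k)" using goodI[OF fin cl acc fd fcf famsub] .
qed

lemma recomp: assumes st: "str F" shows "F = cmp (F0 F) M (Gk F)"
proof (intro set_eqI iffI)
  fix f assume fF: "f \<in> F"
  from st fF have "dom f \<subseteq> E \<or> (\<exists>k\<in>M. k \<subseteq>\<^sub>m f)" unfolding str_def by blast
  then show "f \<in> cmp (F0 F) M (Gk F)"
  proof
    assume "dom f \<subseteq> E" then have "f \<in> F0 F" using fF unfolding F0_def by blast
    then show ?thesis by (rule cmp_I1[of f "F0 F" M "Gk F"])
  next
    assume "\<exists>k\<in>M. k \<subseteq>\<^sub>m f"
    then obtain k where k: "k \<in> M" "k \<subseteq>\<^sub>m f" by blast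
    have eq: "f = k ++ (f |` (-E))" using add_restrict[OF k(2) dM[OF k(1)]] .
    have "dom (f |` (-E)) \<inter> E = {}" by auto
    then have "f |` (-E) \<in> Gk F k" unfolding Gk_def using fF eq by simp
    then have "k ++ (f |` (-E)) \<in> cmp (F0 F) M (Gk F)" by (rule cmp_I2[of k M "f |` (-E)" "Gk F" "F0 F", OF k(1)])
    then show ?thesis using eq by simp
  qed
next
  fix f assume "f \<in> cmp (F0 F) M (Gk F)"
  then show "f \<in> F"
  proof (rule cmp_cases)
    assume "f \<in> F0 F" then show ?thesis unfolding F0_def by blast
  next
    fix k g assume "k \<in> M" "g \<in> Gk F k" "f = k ++ g"
    then show ?thesis unfolding Gk_def by blast
  qed
qed

lemma comp_good:
  assumes g0: "good \<Theta> F0'" and b0: "below_max \<Theta> F0'"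
    and gG: "\<forall>k\<in>M. good (\<Theta>' k) (G k)" and bG: "\<forall>k\<in>M. below_max (\<Theta>' k) (G k)"
  shows "good C (cmp F0' M G)"
proof -
  have mx0: "maxF F0' = M" and ev0: "events F0' = E"
    using bm_facts[OF good_fam_sub[OF g0] b0 spT] unfolding M_def E_def by auto
  have mxG: "\<forall>k\<in>M. maxF (G k) = Tot E' I'"
    using bm_facts(1)[OF good_fam_sub bspec[OF bG] spT'M] gG maxExt_T' by metis
  have evG: "\<forall>k\<in>M. events (G k) = E'"
    using bm_facts(2)[OF good_fam_sub bspec[OF bG] spT'M] gG evT' by metis
  have inG: "\<forall>k\<in>M. inputs (G k) = I'"
    using bm_facts(3)[OF good_fam_sub bspec[OF bG] spT'M] gG inT' by metis
  have MF0: "M \<subseteq> F0'" using mx0 maxF_sub by blast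
  have fin0: "finite F0'" using good_finite[OF g0] .
  have finM: "finite M" using finite_subset[OF MF0 fin0] .
  have finG: "\<forall>k\<in>M. finite (G k)" using gG good_finite by blast
  have dF0: "\<forall>a\<in>F0'. dom a \<subseteq> E" using dom_events ev0 by metis
  have dG: "\<forall>k\<in>M. \<forall>g\<in>G k. dom g \<inter> E = {}"
  proof (intro ballI)
    fix k g assume kg: "k \<in> M" "g \<in> G k"
    have "dom g \<subseteq> E'" using dom_events[OF kg(2)] bspec[OF evG kg(1)] by simp
    then show "dom g \<inter> E = {}" using disjEE' by blast
  qed
  have fin: "finite (cmp F0' M G)" using finite_comp[OF fin0 finM finG] .
  have cl: "cl (cmp F0' M G)"
    using cl_comp[OF good_cl[OF g0] _ MF0 dF0 dMa dG] gG good_cl by blast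
  have acc: "acc (cmp F0' M G)"
    using acc_comp[OF good_acc[OF g0] _ MF0 dMa dG] gG good_acc by blast
  have fd: "findom (cmp F0' M G)"
    using findom_comp[OF good_findom[OF g0] _ MF0] gG good_findom by blast
  have fcf: "fcF (cmp F0' M G)"
  proof (rule fc_cmp[OF fin0 good_fcF[OF g0]])
    show "M = maxF F0'" using mx0 by simp
    show "\<forall>k\<in>M. finite (G k)" using finG .
    show "\<forall>k\<in>M. fcF (G k)" using gG good_fcF by blast
    show "\<forall>k\<in>M. events (G k) = E'" using evG .
    show "\<forall>k\<in>M. inputs (G k) = I'" using inG .
    show "events F0' \<inter> E' = {}" using ev0 disjEE' by simp
    show "\<forall>k\<in>M. \<exists>g\<in>G k. g \<noteq> Map.empty" using neG_gen[OF mxG] .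
    show "M \<noteq> {}" using M_ne .
  qed
  have famsub: "fam C \<subseteq> cmp F0' M G"
    unfolding famC by (rule cmp_mono) (use good_fam_sub[OF g0] gG good_fam_sub in blast)+
  show ?thesis using goodI[OF fin cl acc fd fcf famsub] .
qed

end

context setting
begin

lemma M_sub_good: "good \<Theta> F \<Longrightarrow> M \<subseteq> F"
  using M_fam good_fam_sub by blast

lemma decomp_min: assumes m: "mingood C F"
  shows "str F" "mingood \<Theta> (F0 F)" "\<forall>k\<in>M. mingood (\<Theta>' k) (Gk F k)" "F = cmp (F0 F) M (Gk F)" "below_max C F"
proof -
  have g: "good C F" using m unfolding mingood_def by simp
  show bm: "below_max C F" using mingood_bm[OF m spC fcC] .
  have "Fs F \<subseteq> F" unfolding Fs_def by blast
  then have "F = Fs F" using m struct_good[OF g bm] unfolding mingood_def by blast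
  then show st: "str F" using str_Fs by metis
  have g0: "good \<Theta> (F0 F)" and b0: "below_max \<Theta> (F0 F)" using F0_good[OF g bm] by auto
  have gG: "\<forall>k\<in>M. good (\<Theta>' k) (Gk F k)" using Gk_good(1)[OF g bm st] by blast
  have bG: "\<forall>k\<in>M. below_max (\<Theta>' k) (Gk F k)" using Gk_good(2)[OF g bm st] by blast
  show rc: "F = cmp (F0 F) M (Gk F)" using recomp[OF st] .
  have "\<forall>F2. good \<Theta> F2 \<longrightarrow> F2 \<subseteq> F0 F \<longrightarrow> F0 F = F2"
  proof (intro allI impI)
    fix F2 assume g2: "good \<Theta> F2" and s2: "F2 \<subseteq> F0 F"
    have b2: "below_max \<Theta> F2" using b0 s2 unfolding below_max_def by blast
    have gc: "good C (cmp F2 M (Gk F))" using comp_good[OF g2 b2 gG bG] .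
    have "cmp F2 M (Gk F) \<subseteq> cmp (F0 F) M (Gk F)" using cmp_mono[OF s2] by blast
    then have "cmp F2 M (Gk F) \<subseteq> F" using rc by simp
    then have eq: "F = cmp F2 M (Gk F)" using m gc unfolding mingood_def by blast
    have "F0 F \<subseteq> F2"
    proof
      fix f assume f: "f \<in> F0 F"
      then have fF: "f \<in> F" and df: "dom f \<subseteq> E" unfolding F0_def by auto
      have "f \<in> cmp F2 M (Gk F)" using fF eq by simp
      then show "f \<in> F2"
      proof (rule cmp_cases)
        assume "f \<in> F2" then show ?thesis .
      next
        fix k g' assume kg: "k \<in> M" "g' \<in> Gk F k" "f = k ++ g'"
        have dg: "dom g' \<inter> E = {}" using kg(2) unfolding Gk_def by blast
        have "dom g' \<subseteq> E" using df kg(3) by auto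
        then have "g' = Map.empty" using disj_sub_empty dg by blast
        then have "f = k" using kg(3) by simp
        then show ?thesis using M_sub_good[OF g2] kg(1) by blast
      qed
    qed
    then show "F0 F = F2" using s2 by blast
  qed
  then show "mingood \<Theta> (F0 F)" unfolding mingood_def using g0 by blast
  show "\<forall>k\<in>M. mingood (\<Theta>' k) (Gk F k)"
  proof
    fix k1 assume k1: "k1 \<in> M"
    have "\<forall>G2. good (\<Theta>' k1) G2 \<longrightarrow> G2 \<subseteq> Gk F k1 \<longrightarrow> Gk F k1 = G2"
    proof (intro allI impI)
      fix G2 assume g2: "good (\<Theta>' k1) G2" and s2: "G2 \<subseteq> Gk F k1"
      define G' where "G' = (Gk F)(k1 := G2)"
      have gG': "\<forall>k\<in>M. good (\<Theta>' k) (G' k)" using gG g2 unfolding G'_def by simp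
      have sG': "\<forall>k\<in>M. G' k \<subseteq> Gk F k" using s2 unfolding G'_def by simp
      have bG': "\<forall>k\<in>M. below_max (\<Theta>' k) (G' k)" using bG sG' unfolding below_max_def by blast
      have gc: "good C (cmp (F0 F) M G')" using comp_good[OF g0 b0 gG' bG'] .
      have "cmp (F0 F) M G' \<subseteq> cmp (F0 F) M (Gk F)" using cmp_mono[OF _ sG'] by blast
      then have "cmp (F0 F) M G' \<subseteq> F" using rc by simp
      then have eq: "F = cmp (F0 F) M G'" using m gc unfolding mingood_def by blast
      have "Gk F k1 \<subseteq> G2"
      proof
        fix g assume gk: "g \<in> Gk F k1"
        then have dg: "dom g \<inter> E = {}" and fF: "k1 ++ g \<in> F" unfolding Gk_def by auto
        have "k1 ++ g \<in> cmp (F0 F) M G'" using fF eq by simp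
        then show "g \<in> G2"
        proof (rule cmp_cases)
          assume "k1 ++ g \<in> F0 F"
          then have "dom (k1 ++ g) \<subseteq> E" unfolding F0_def by simp
          then have "dom g \<subseteq> E" by auto
          then have "g = Map.empty" using disj_sub_empty dg by blast
          then show ?thesis using cl_empty[OF good_cl[OF g2]] by simp
        next
          fix k g2 assume kg: "k \<in> M" "g2 \<in> G' k" "k1 ++ g = k ++ g2"
          have "g2 \<in> Gk F k" using kg(1,2) sG' by blast
          then have dg2: "dom g2 \<inter> E = {}" unfolding Gk_def by blast
          have a1: "k1 \<subseteq>\<^sub>m k1 ++ g" using le_add_left[OF dom_disj_k[OF k1 dg]] .
          have a2: "k \<subseteq>\<^sub>m k1 ++ g" using le_add_left[OF dom_disj_k[OF kg(1) dg2]] kg(3) by simp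
          have kk: "k = k1" using le_same_dom[OF a2 a1] dM[OF k1] dM[OF kg(1)] by simp
          have "g = (k1 ++ g) |` (-E)" using restrict_add[OF dg dM[OF k1]] by simp
          also have "\<dots> = (k ++ g2) |` (-E)" using kg(3) by simp
          also have "\<dots> = g2" using restrict_add[OF dg2 dM[OF kg(1)]] .
          finally have "g = g2" .
          then show ?thesis using kg(2) kk unfolding G'_def by simp
        qed
      qed
      then show "Gk F k1 = G2" using s2 by blast
    qed
    then show "mingood (\<Theta>' k1) (Gk F k1)" unfolding mingood_def using bspec[OF gG k1] by blast
  qed
qed

lemma comp_min: assumes m0: "mingood \<Theta> F0'" and mG: "\<forall>k\<in>M. mingood (\<Theta>' k) (G k)"
  shows "mingood C (cmp F0' M G)"
proof -
  have g0: "good \<Theta> F0'" using m0 unfolding mingood_def by simp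
  have b0: "below_max \<Theta> F0'" using mingood_bm[OF m0 spT fcT] .
  have gG: "\<forall>k\<in>M. good (\<Theta>' k) (G k)" using mG unfolding mingood_def by blast
  have bG: "\<forall>k\<in>M. below_max (\<Theta>' k) (G k)" using mingood_bm spT'M fcT'M mG by blast
  have gc: "good C (cmp F0' M G)" using comp_good[OF g0 b0 gG bG] .
  have ev0: "events F0' = E" using bm_facts(2)[OF good_fam_sub[OF g0] b0 spT] unfolding E_def .
  have evG: "\<forall>k\<in>M. events (G k) = E'"
  proof
    fix k assume k: "k \<in> M"
    show "events (G k) = E'" using bm_facts(2)[OF good_fam_sub[OF bspec[OF gG k]] bspec[OF bG k] spT'M[OF k]] evT'[OF k] by simp
  qed
  have dGk: "\<And>k g. k \<in> M \<Longrightarrow> g \<in> G k \<Longrightarrow> dom g \<inter> E = {}"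
  proof -
    fix k g assume kg: "k \<in> M" "g \<in> G k"
    have "dom g \<subseteq> E'" using dom_events[OF kg(2)] bspec[OF evG kg(1)] by simp
    then show "dom g \<inter> E = {}" using disjEE' by blast
  qed
  have "\<forall>F2. good C F2 \<longrightarrow> F2 \<subseteq> cmp F0' M G \<longrightarrow> cmp F0' M G = F2"
  proof (intro allI impI)
    fix F2 assume g2: "good C F2" and s2: "F2 \<subseteq> cmp F0' M G"
    define F3 where "F3 = {f\<in>F2. \<exists>m\<in>maxExt C. f \<subseteq>\<^sub>m m}"
    have g3: "good C F3" unfolding F3_def using filter_good[OF g2 spC fcC] .
    have b3: "below_max C F3" unfolding F3_def below_max_def by blast
    have s3: "F3 \<subseteq> F2" unfolding F3_def by blast
    define F4 where "F4 = Fs F3"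
    have g4: "good C F4" unfolding F4_def using struct_good[OF g3 b3] .
    have s4: "F4 \<subseteq> F3" unfolding F4_def Fs_def by blast
    have b4: "below_max C F4" using b3 s4 unfolding below_max_def by blast
    have st4: "str F4" unfolding F4_def by (rule str_Fs)
    have s24: "F4 \<subseteq> cmp F0' M G" using s2 s3 s4 by blast
    have "F0 F4 \<subseteq> F0'"
    proof
      fix f assume f: "f \<in> F0 F4"
      then have fF: "f \<in> F4" and df: "dom f \<subseteq> E" unfolding F0_def by auto
      have "f \<in> cmp F0' M G" using fF s24 by blast
      then show "f \<in> F0'"
      proof (rule cmp_cases)
        assume "f \<in> F0'" then show ?thesis .
      next
        fix k g assume kg: "k \<in> M" "g \<in> G k" "f = k ++ g"
        have "dom g \<subseteq> E" using df kg(3) by auto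
        then have "g = Map.empty" using disj_sub_empty dGk[OF kg(1,2)] by blast
        then have "f = k" using kg(3) by simp
        then show ?thesis using M_sub_good[OF g0] kg(1) by blast
      qed
    qed
    then have e0: "F0' = F0 F4" using m0 F0_good(1)[OF g4 b4] unfolding mingood_def by blast
    have eG: "\<forall>k\<in>M. G k = Gk F4 k"
    proof
      fix k assume k: "k \<in> M"
      have "Gk F4 k \<subseteq> G k"
      proof
        fix g assume gk: "g \<in> Gk F4 k"
        then have dg: "dom g \<inter> E = {}" and fF: "k ++ g \<in> F4" unfolding Gk_def by auto
        have "k ++ g \<in> cmp F0' M G" using fF s24 by blast
        then show "g \<in> G k"
        proof (rule cmp_cases)
          assume a: "k ++ g \<in> F0'"
          have "dom (k ++ g) \<subseteq> E" using dom_events[OF a] ev0 by simp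
          then have "dom g \<subseteq> E" by auto
          then have "g = Map.empty" using disj_sub_empty dg by blast
          then show ?thesis using cl_empty[OF good_cl[OF bspec[OF gG k]]] by simp
        next
          fix k2 g2 assume kg: "k2 \<in> M" "g2 \<in> G k2" "k ++ g = k2 ++ g2"
          have dg2: "dom g2 \<inter> E = {}" using dGk[OF kg(1,2)] .
          have a1: "k \<subseteq>\<^sub>m k ++ g" using le_add_left[OF dom_disj_k[OF k dg]] .
          have a2: "k2 \<subseteq>\<^sub>m k ++ g" using le_add_left[OF dom_disj_k[OF kg(1) dg2]] kg(3) by simp
          have kk: "k2 = k" using le_same_dom[OF a2 a1] dM[OF k] dM[OF kg(1)] by simp
          have "g = (k ++ g) |` (-E)" using restrict_add[OF dg dM[OF k]] by simp
          also have "\<dots> = (k2 ++ g2) |` (-E)" using kg(3) by simp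
          also have "\<dots> = g2" using restrict_add[OF dg2 dM[OF kg(1)]] .
          finally show ?thesis using kg(2) kk by simp
        qed
      qed
      then show "G k = Gk F4 k" using mG k Gk_good(1)[OF g4 b4 st4 k] unfolding mingood_def by blast
    qed
    have "cmp F0' M G = cmp (F0 F4) M (Gk F4)" using e0 cmp_cong[of M G "Gk F4" F0'] eG by simp
    also have "\<dots> = F4" using recomp[OF st4] by simp
    finally have "cmp F0' M G \<subseteq> F2" using s3 s4 by blast
    then show "cmp F0' M G = F2" using s2 by blast
  qed
  then show ?thesis unfolding mingood_def using gc by blast
qed

end

context setting
begin

lemma CC_T: "CC \<Theta> = {\<Theta>1. space \<Theta>1 \<and> mingood \<Theta> (fam \<Theta>1)}" using CC_char[OF eT] .
lemma CC_T': "k \<in> M \<Longrightarrow> CC (\<Theta>' k) = {\<Theta>1. space \<Theta>1 \<and> mingood (\<Theta>' k) (fam \<Theta>1)}"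
  using CC_char[OF space_empty[OF spT'M]] by blast
lemma CC_C: "CC C = {\<Theta>1. space \<Theta>1 \<and> mingood C (fam \<Theta>1)}" using CC_char[OF eC] .

lemma cseq_fam:
  assumes spH: "space Th" and mH: "mingood \<Theta> (fam Th)"
    and spH': "\<forall>k\<in>M. space (Th' k)" and mH': "\<forall>k\<in>M. mingood (\<Theta>' k) (fam (Th' k))"
  shows "maxExt Th = M" "space (cseq Th Th')" "fam (cseq Th Th') = cmp (fam Th) M (\<lambda>k. fam (Th' k))"
proof -
  have g0: "good \<Theta> (fam Th)" using mH unfolding mingood_def by simp
  have b0: "below_max \<Theta> (fam Th)" using mingood_bm[OF mH spT fcT] .
  show mx: "maxExt Th = M"
    using maxExt_fam[OF space_empty[OF spH]] bm_facts(1)[OF good_fam_sub[OF g0] b0 spT] unfolding M_def by simp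
  have ev0: "events (fam Th) = E" using bm_facts(2)[OF good_fam_sub[OF g0] b0 spT] unfolding E_def .
  have dA: "\<forall>a\<in>Th. dom a \<subseteq> E"
  proof
    fix a assume "a \<in> Th"
    then have "a \<in> fam Th" using subset_fam by blast
    then show "dom a \<subseteq> E" using dom_events ev0 by metis
  qed
  have dK: "\<forall>k\<in>maxExt Th. dom k = E" using mx dMa by simp
  have spB: "\<forall>k\<in>maxExt Th. space (Th' k)" using mx spH' by simp
  have dB: "\<forall>k\<in>maxExt Th. \<forall>b\<in>Th' k. dom b \<inter> E = {}"
  proof (intro ballI)
    fix k b assume k: "k \<in> maxExt Th" and b: "b \<in> Th' k"
    have kM: "k \<in> M" using k mx by simp
    have gk: "good (\<Theta>' k) (fam (Th' k))" using bspec[OF mH' kM] unfolding mingood_def by simp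
    have bk: "below_max (\<Theta>' k) (fam (Th' k))" using mingood_bm[OF bspec[OF mH' kM] spT'M[OF kM] fcT'M[OF kM]] .
    have "events (fam (Th' k)) = E'" using bm_facts(2)[OF good_fam_sub[OF gk] bk spT'M[OF kM]] evT'[OF kM] by simp
    then have "events (Th' k) = E'" using events_fam by metis
    then have "dom b \<subseteq> E'" using dom_events[OF b] by simp
    then show "dom b \<inter> E = {}" using disjEE' by blast
  qed
  show "space (cseq Th Th')" using cseq_space[OF spH dA dK spB dB] .
  have eq: "cseq Th Th' = cmp Th (maxExt Th) Th'" using cseq_comp[OF dK dB] .
  have "fam (cseq Th Th') = cmp (fam Th) (maxExt Th) (\<lambda>k. fam (Th' k))"
    unfolding eq by (rule fam_comp[OF dA dK dB maxExt_sub_fam])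
  then show "fam (cseq Th Th') = cmp (fam Th) M (\<lambda>k. fam (Th' k))" using mx by simp
qed

theorem main: "CC C = {cseq Th Th' | Th Th'. Th \<in> CC \<Theta> \<and> (\<forall>k\<in>maxExt \<Theta>. Th' k \<in> CC (\<Theta>' k))}"
proof (intro set_eqI iffI)
  fix T1 assume "T1 \<in> CC C"
  then have sp1: "space T1" and m1: "mingood C (fam T1)" using CC_C by auto
  let ?F = "fam T1"
  define Th where "Th = irr (F0 ?F)"
  define Th' where "Th' = (\<lambda>k. irr (Gk ?F k))"
  have mF0: "mingood \<Theta> (F0 ?F)" using decomp_min(2)[OF m1] .
  have mG: "\<forall>k\<in>M. mingood (\<Theta>' k) (Gk ?F k)" using decomp_min(3)[OF m1] .
  have rc: "?F = cmp (F0 ?F) M (Gk ?F)" using decomp_min(4)[OF m1] .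
  have g0: "good \<Theta> (F0 ?F)" using mF0 unfolding mingood_def by simp
  have spH: "space Th" and fH: "fam Th = F0 ?F" unfolding Th_def using good_irr[OF g0] by auto
  have spH': "\<forall>k\<in>M. space (Th' k)" and fH': "\<forall>k\<in>M. fam (Th' k) = Gk ?F k"
    unfolding Th'_def using good_irr mG unfolding mingood_def by blast+
  have mH: "mingood \<Theta> (fam Th)" using mF0 fH by simp
  have mH': "\<forall>k\<in>M. mingood (\<Theta>' k) (fam (Th' k))" using mG fH' by simp
  have c1: "Th \<in> CC \<Theta>" using CC_T spH mH by blast
  have c2: "\<forall>k\<in>maxExt \<Theta>. Th' k \<in> CC (\<Theta>' k)"
  proof
    fix k assume "k \<in> maxExt \<Theta>"
    then have k: "k \<in> M" unfolding M_def .
    show "Th' k \<in> CC (\<Theta>' k)" using CC_T'[OF k] bspec[OF spH' k] bspec[OF mH' k] by blast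
  qed
  have sp2: "space (cseq Th Th')" using cseq_fam(2)[OF spH mH spH' mH'] .
  have "fam (cseq Th Th') = cmp (fam Th) M (\<lambda>k. fam (Th' k))" using cseq_fam(3)[OF spH mH spH' mH'] .
  also have "\<dots> = cmp (F0 ?F) M (Gk ?F)" using fH cmp_cong[of M "\<lambda>k. fam (Th' k)" "Gk ?F"] fH' by simp
  also have "\<dots> = ?F" using rc by simp
  finally have "T1 = cseq Th Th'" using space_eq_fam[OF sp1 sp2] by simp
  then show "T1 \<in> {cseq Th Th' | Th Th'. Th \<in> CC \<Theta> \<and> (\<forall>k\<in>maxExt \<Theta>. Th' k \<in> CC (\<Theta>' k))}"
    using c1 c2 by blast
next
  fix T1 assume "T1 \<in> {cseq Th Th' | Th Th'. Th \<in> CC \<Theta> \<and> (\<forall>k\<in>maxExt \<Theta>. Th' k \<in> CC (\<Theta>' k))}"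
  then obtain Th Th' where t: "T1 = cseq Th Th'" "Th \<in> CC \<Theta>" "\<forall>k\<in>maxExt \<Theta>. Th' k \<in> CC (\<Theta>' k)" by blast
  have spH: "space Th" and mH: "mingood \<Theta> (fam Th)" using t(2) CC_T by auto
  have spH': "\<forall>k\<in>M. space (Th' k)" and mH': "\<forall>k\<in>M. mingood (\<Theta>' k) (fam (Th' k))"
    using t(3) CC_T' unfolding M_def by blast+
  have sp2: "space (cseq Th Th')" using cseq_fam(2)[OF spH mH spH' mH'] .
  have f2: "fam (cseq Th Th') = cmp (fam Th) M (\<lambda>k. fam (Th' k))" using cseq_fam(3)[OF spH mH spH' mH'] .
  have "mingood C (cmp (fam Th) M (\<lambda>k. fam (Th' k)))" using comp_min[OF mH mH'] .
  then show "T1 \<in> CC C" using CC_C sp2 f2 t(1) by simp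
qed

end

theorem theorem2:
  fixes \<Theta> :: "('e \<rightharpoonup> 'v) set"
    and \<Theta>' :: "('e \<rightharpoonup> 'v) \<Rightarrow> ('e \<rightharpoonup> 'v) set"
  assumes "space \<Theta>" and "free_choice \<Theta>"
    and "\<And>k. k \<in> maxExt \<Theta> \<Longrightarrow> space (\<Theta>' k)"
    and "\<And>k. k \<in> maxExt \<Theta> \<Longrightarrow> free_choice (\<Theta>' k)"
    and "\<And>k. k \<in> maxExt \<Theta> \<Longrightarrow> events \<Theta> \<inter> events (\<Theta>' k) = {}"
    and "\<And>k1 k2. k1 \<in> maxExt \<Theta> \<Longrightarrow> k2 \<in> maxExt \<Theta> \<Longrightarrow>
           events (\<Theta>' k1) = events (\<Theta>' k2) \<and>
           (\<forall>\<omega>\<in>events (\<Theta>' k1). inputs (\<Theta>' k1) \<omega> = inputs (\<Theta>' k2) \<omega>)"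
  shows "CC (cseq \<Theta> \<Theta>') =
         {cseq \<Theta>h \<Theta>h' | \<Theta>h \<Theta>h'. \<Theta>h \<in> CC \<Theta> \<and> (\<forall>k\<in>maxExt \<Theta>. \<Theta>h' k \<in> CC (\<Theta>' k))}"
proof -
  interpret setting \<Theta> \<Theta>' using assms by (unfold_locales) blast+
  show ?thesis using main unfolding C_def .
qed


end
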